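(* Let $n\ge 2$, let $E \subset \mathbb{R}^n$ be a compact set with $\mathrm{diam}(E) < R$, where $R>0$. Fix $k \in \{1,\ldots, n-1\}$ and let $h \in [0,\infty)$ satisfy $hR < k$. Then there exists a constant $C>0$ depending only on $n,k,hR$ such that \[ \bar\mu(\mathscr{F}_k^-,E) \ge \frac{C}{\mathscr{H}_\Psi(E)}, \qquad \text{where } \, \Psi(t) = \begin{cases} Rt & \text{if } k=1, \\ t^2 |\log(R/t)| & \text{if } k=2, \\ t^2 & \text{if } k \ge 3. \end{cases} \] In particular, $\bar \mu(\mathscr{F}_k^-,E) = +\infty$ whenever $\mathscr{H}_\Psi(E) = 0$.
   Context: For a symmetric matrix $A$ with eigenvalues $\lambda_1(A)\le\dots\le\lambda_n(A)$, set $\mathcal{P}_k^-(A)=\lambda_1(A)+\dots+\lambda_k(A)$. For $h\ge 0$ the operator $\mathscr{F}_k^-$ is $\mathscr{F}_k^-[w] = \mathcal{P}_k^-(\nabla^2 w) - h|\nabla w|$, where $\nabla^2 w$ is the Hessian. Differential inequalities $\mathscr{F}_k^-[w]+cw\ge 0$ for upper semicontinuous $w$ are understood in the viscosity sense. For an open set $\Omega\subset\mathbb{R}^n$, $\bar\mu(\mathscr{F}_k^-,\Omega) = \sup\{c\in\mathbb{R} : \exists\, w \in \mathrm{USC}(\overline\Omega),\ w<0 \text{ on } \overline\Omega,\ \mathscr{F}_k^-[w]+cw\ge 0 \text{ on } \Omega\}$, and for a set $E\subset\mathbb{R}^n$, $\bar\mu(\mathscr{F}_k^-,E)=\sup\{\bar\mu(\mathscr{F}_k^-,\Omega):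 \Omega \text{ open}, E\subset\Omega\}$. For a continuous non-decreasing $\Psi:[0,c)\to[0,\infty)$ with $\Psi(0)=0$ (near $0$), the generalized Hausdorff measure is $\mathscr{H}_\Psi(E) = \lim_{\delta\to 0^+}\inf\{\sum_j \Psi(r_j) : E\subset \bigcup_{j=1}^\infty B_{r_j}(x_j),\ r_j\le\delta\}$. The convention $C/0=+\infty$ is used. *)

theory Defs
  imports "HOL-Analysis.Analysis" "HOL-Computational_Algebra.Polynomial" "HOL-Library.Multiset"
begin

definition charpoly :: "real^'n^'n \<Rightarrow> real poly" where
  "charpoly A = det (\<chi> i j. (if i = j then [:0, 1:] else 0) - [: A $ i $ j :])"

text \<open>The eigenvalues (roots of the characteristic polynomial, counted with
  multiplicity) listed in non-decreasing order: lambda_1 <= ... <= lambda_n.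
  For a symmetric matrix all n eigenvalues are real.\<close>
definition eigenvalues_sorted :: "real^'n^'n \<Rightarrow> real list" where
  "eigenvalues_sorted A = sorted_list_of_multiset (proots (charpoly A))"

definition Pk_minus :: "nat \<Rightarrow> real^'n^'n \<Rightarrow> real" where
  "Pk_minus k A = sum_list (take k (eigenvalues_sorted A))"

definition C2_near :: "(real^'n \<Rightarrow> real) \<Rightarrow> real^'n \<Rightarrow> (real^'n \<Rightarrow> real^'n)
    \<Rightarrow> (real^'n \<Rightarrow> real^'n^'n) \<Rightarrow> bool" where
  "C2_near phi x0 Dphi Hphi \<longleftrightarrow>
     (\<exists>U. open U \<and> x0 \<in> U \<and>
        (\<forall>y\<in>U. (phi has_derivative (\<lambda>v. Dphi y \<bullet> v)) (at y) \<and>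
                (Dphi has_derivative (\<lambda>v. Hphi y *v v)) (at y)) \<and>
        continuous_on U Hphi)"

definition usc_on :: "'a::metric_space set \<Rightarrow> ('a \<Rightarrow> real) \<Rightarrow> bool" where
  "usc_on S w \<longleftrightarrow>
     (\<forall>x\<in>S. \<forall>a. w x < a \<longrightarrow> (\<exists>e>0. \<forall>y\<in>S. dist y x < e \<longrightarrow> w y < a))"

text \<open>Viscosity sense of  P_k^-(D^2 w) - h |D w| + c w >= 0  on the open set Omega:
  whenever a C^2 function phi touches w from above at x0 (w - phi has a local
  maximum at x0), the inequality holds for phi at x0 with w(x0) in the zero-order term.\<close>
definition visc_sub :: "nat \<Rightarrow> real \<Rightarrow> real \<Rightarrow> (real^'n) set \<Rightarrow> (real^'n \<Rightarrow> real) \<Rightarrow> bool" where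
  "visc_sub k h c \<Omega> w \<longleftrightarrow>
     (\<forall>x0\<in>\<Omega>. \<forall>phi Dphi Hphi.
        C2_near phi x0 Dphi Hphi \<longrightarrow>
        (\<exists>r>0. \<forall>y\<in>\<Omega> \<inter> ball x0 r. w y - phi y \<le> w x0 - phi x0) \<longrightarrow>
        Pk_minus k (Hphi x0) - h * norm (Dphi x0) + c * w x0 \<ge> 0)"

definition mu_bar_open :: "nat \<Rightarrow> real \<Rightarrow> (real^'n) set \<Rightarrow> ereal" where
  "mu_bar_open k h \<Omega> = Sup {ereal c | c. \<exists>w. usc_on (closure \<Omega>) w \<and>
       (\<forall>x\<in>closure \<Omega>. w x < 0) \<and> visc_sub k h c \<Omega> w}"

definition mu_bar :: "nat \<Rightarrow> real \<Rightarrow> (real^'n) set \<Rightarrow> ereal" where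
  "mu_bar k h E = Sup {mu_bar_open k h \<Omega> | \<Omega>. open \<Omega> \<and> E \<subseteq> \<Omega>}"

definition gen_hausdorff :: "(real \<Rightarrow> real) \<Rightarrow> (real^'n) set \<Rightarrow> ennreal" where
  "gen_hausdorff \<Psi> E = (SUP \<delta>\<in>{0<..}. INF (x, r)\<in>{(x :: nat \<Rightarrow> real^'n, r :: nat \<Rightarrow> real).
        E \<subseteq> (\<Union>j. ball (x j) (r j)) \<and> (\<forall>j. 0 \<le> r j \<and> r j \<le> \<delta>)}.
        (\<Sum>j. ennreal (\<Psi> (r j))))"

text \<open>The gauge function Psi of the theorem (with Psi(0) = 0 in the case k = 2).\<close>
definition Psi_gauge :: "nat \<Rightarrow> real \<Rightarrow> real \<Rightarrow> real" where
  "Psi_gauge k R t =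
     (if k = 1 then R * t
      else if k = 2 then (if t = 0 then 0 else t^2 * \<bar>ln (R / t)\<bar>)
      else t^2)"

text \<open>C / H with the convention C / 0 = +infinity (and C / infinity = 0).\<close>
definition div_conv :: "real \<Rightarrow> ennreal \<Rightarrow> ereal" where
  "div_conv C H = (if H = 0 then \<infinity> else ereal C / enn2ereal H)"

end

theory Submission
  imports Defs
begin

lemma sym_inner:
  fixes H :: "real^'n^'n"
  assumes "transpose H = H"
  shows "x \<bullet> (H *v y) = (H *v x) \<bullet> y"
proof -
  have "x \<bullet> (H *v y) = (x v* H) \<bullet> y" by (simp add: dot_lmul_matrix)
  also have "x v* H = transpose H *v x" by (simp add: transpose_matrix_vector)
  finally show ?thesis using assms by simp
qed

lemma quad_expand:
  fixes H :: "real^'n^'n"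
  assumes "transpose H = H"
  shows "(u + t *\<^sub>R w) \<bullet> (H *v (u + t *\<^sub>R w)) =
     u \<bullet> (H *v u) + 2 * t * (w \<bullet> (H *v u)) + t^2 * (w \<bullet> (H *v w))"
proof -
  have "u \<bullet> (H *v w) = w \<bullet> (H *v u)"
    using sym_inner[OF assms, of u w] by (simp add: inner_commute)
  then show ?thesis
    by (simp add: matrix_vector_right_distrib matrix_vector_mult_scaleR inner_add_left inner_add_right
        algebra_simps power2_eq_square)
qed

lemma quad_scale:
  fixes H :: "real^'n^'n"
  shows "(c *\<^sub>R x) \<bullet> (H *v (c *\<^sub>R x)) = c^2 * (x \<bullet> (H *v x))"
  by (simp add: matrix_vector_mult_scaleR power2_eq_square)

lemma lin_zero:
  fixes p M :: real
  assumes "\<And>t. 2 * t * p \<le> t^2 * M"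
  shows "p = 0"
proof (rule ccontr)
  assume "p \<noteq> 0"
  define A where "A = \<bar>M\<bar> + 1"
  have A: "A > 0" "M \<le> A - 1" unfolding A_def by auto
  have "2 * (p / A) * p \<le> (p/A)^2 * M" by (rule assms)
  then have "2 * p^2 * A \<le> p^2 * M" using A
    by (simp add: field_simps power2_eq_square)
  moreover have "p^2 > 0" using \<open>p \<noteq> 0\<close> by simp
  ultimately have "2 * A \<le> M" by (simp add: mult.commute)
  with A show False by linarith
qed

lemma eigvec_max:
  fixes H :: "real^'n^'n"
  assumes sym: "transpose H = H" and V: "subspace V" and inv: "\<forall>v\<in>V. H *v v \<in> V"
    and ne: "V \<noteq> {0}"
  shows "\<exists>u\<in>V. norm u = 1 \<and> H *v u = (u \<bullet> (H *v u)) *\<^sub>R u"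
proof -
  define S where "S = V \<inter> sphere 0 1"
  have cS: "compact S" unfolding S_def
    using closed_subspace[OF V] by (simp add: closed_Int_compact)
  obtain v where v: "v \<in> V" "v \<noteq> 0" using ne V subspace_0 by blast
  have "(1 / norm v) *\<^sub>R v \<in> S" unfolding S_def using v V
    by (simp add: subspace_scale)
  then have neS: "S \<noteq> {}" by blast
  have cont: "continuous_on S (\<lambda>x. x \<bullet> (H *v x))"
    by (intro continuous_intros linear_continuous_on matrix_vector_mul_linear)
  obtain u where u: "u \<in> S" and umax: "\<And>y. y \<in> S \<Longrightarrow> y \<bullet> (H *v y) \<le> u \<bullet> (H *v u)"
    using continuous_attains_sup[OF cS neS cont] by blast
  have uV: "u \<in> V" and un: "norm u = 1" using u unfolding S_def by auto
  have uu: "u \<bullet> u = 1" using un by (simp add: norm_eq_1)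
  have perp: "w \<bullet> (H *v u) = 0" if wV: "w \<in> V" and wu: "w \<bullet> u = 0" for w
  proof -
    have "2 * t * (w \<bullet> (H *v u)) \<le> t^2 * ((u \<bullet> (H *v u)) * (w \<bullet> w) - w \<bullet> (H *v w))" for t
    proof -
      let ?y = "u + t *\<^sub>R w"
      have yV: "?y \<in> V" using uV wV V by (simp add: subspace_add subspace_scale)
      have ny: "?y \<bullet> ?y = 1 + t^2 * (w \<bullet> w)" using uu wu
        by (simp add: inner_add_left inner_add_right inner_commute power2_eq_square)
      then have nypos: "?y \<bullet> ?y > 0" by (smt (verit) inner_ge_zero zero_le_power2 mult_nonneg_nonneg)
      have nyn: "norm ?y ^ 2 = ?y \<bullet> ?y" by (simp add: power2_norm_eq_inner)
      have "(1 / norm ?y) *\<^sub>R ?y \<in> S" unfolding S_def using yV V nypos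
        by (auto simp: subspace_scale)
      then have "((1 / norm ?y) *\<^sub>R ?y) \<bullet> (H *v ((1 / norm ?y) *\<^sub>R ?y)) \<le> u \<bullet> (H *v u)"
        by (rule umax)
      then have "(1 / norm ?y)^2 * (?y \<bullet> (H *v ?y)) \<le> u \<bullet> (H *v u)"
        by (simp only: quad_scale)
      then have "?y \<bullet> (H *v ?y) \<le> (u \<bullet> (H *v u)) * (norm ?y)^2"
        using nypos nyn by (simp add: field_simps power_divide)
      then have "?y \<bullet> (H *v ?y) \<le> (u \<bullet> (H *v u)) * (1 + t^2 * (w \<bullet> w))"
        using nyn ny by simp
      then show ?thesis unfolding quad_expand[OF sym] by (simp add: algebra_simps)
    qed
    then show ?thesis by (rule lin_zero)
  qed
  define \<mu> where "\<mu> = u \<bullet> (H *v u)"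
  define d where "d = H *v u - \<mu> *\<^sub>R u"
  have dV: "d \<in> V" unfolding d_def using inv uV V by (simp add: subspace_diff subspace_scale)
  have du: "d \<bullet> u = 0"
  proof -
    have "u \<bullet> d = u \<bullet> (H *v u) - \<mu> * (u \<bullet> u)" unfolding d_def by (simp add: inner_diff_right)
    then show ?thesis using uu unfolding \<mu>_def by (simp add: inner_commute)
  qed
  have dH: "d \<bullet> (H *v u) = 0" by (rule perp[OF dV du])
  have "d \<bullet> d = 0" using du dH unfolding d_def
    by (simp add: inner_diff_right inner_diff_left inner_commute)
  then have "d = 0" by simp
  then show ?thesis using uV un unfolding d_def \<mu>_def by auto
qed

lemma spectral_sub:
  fixes H :: "real^'n^'n"
  assumes sym: "transpose H = H"
  shows "subspace V \<Longrightarrow> (\<forall>v\<in>V. H *v v \<in> V) \<Longrightarrow>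
    \<exists>B. B \<subseteq> V \<and> pairwise orthogonal B \<and>
        (\<forall>b\<in>B. norm b = 1 \<and> H *v b = (b \<bullet> (H *v b)) *\<^sub>R b) \<and> V \<subseteq> span B"
proof (induction "dim V" arbitrary: V rule: less_induct)
  case less
  show ?case
  proof (cases "V = {0}")
    case True
    then show ?thesis by (intro exI[of _ "{}"]) auto
  next
    case False
    obtain u where uV: "u \<in> V" and un: "norm u = 1" and uH: "H *v u = (u \<bullet> (H *v u)) *\<^sub>R u"
      using eigvec_max[OF sym less.prems False] by blast
    have uu: "u \<bullet> u = 1" using un by (simp add: norm_eq_1)
    define V' where "V' = V \<inter> {x. x \<bullet> u = 0}"
    have sV': "subspace V'" unfolding V'_def
      using less.prems(1) subspace_hyperplane2 by (rule subspace_inter)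
    have iV': "\<forall>v\<in>V'. H *v v \<in> V'"
    proof
      fix v assume v: "v \<in> V'"
      have "(H *v v) \<bullet> u = v \<bullet> (H *v u)" using sym_inner[OF sym, of v u] by simp
      also have "\<dots> = (u \<bullet> (H *v u)) * (v \<bullet> u)" by (subst uH) simp
      also have "\<dots> = 0" using v unfolding V'_def by simp
      finally show "H *v v \<in> V'" using v less.prems(2) unfolding V'_def by auto
    qed
    have "u \<notin> V'" unfolding V'_def using uu by simp
    then have "V' \<subset> V" using uV unfolding V'_def by blast
    moreover have s1: "span V' = V'" using sV' by (simp add: span_eq_iff)
    moreover have s2: "span V = V" using less.prems(1) by (simp add: span_eq_iff)
    ultimately have "span V' \<subset> span V" by (simp only: s1 s2)
    then have "dim V' < dim V" by (rule dim_psubset)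
    from less.hyps[OF this sV' iV'] obtain B' where B': "B' \<subseteq> V'" "pairwise orthogonal B'"
      "\<forall>b\<in>B'. norm b = 1 \<and> H *v b = (b \<bullet> (H *v b)) *\<^sub>R b" "V' \<subseteq> span B'" by blast
    have uB': "u \<notin> B'" using B'(1) uu unfolding V'_def by auto
    show ?thesis
    proof (intro exI[of _ "insert u B'"] conjI)
      show "insert u B' \<subseteq> V" using B'(1) uV unfolding V'_def by auto
      show "pairwise orthogonal (insert u B')"
        using B'(1,2) uB' unfolding pairwise_insert V'_def orthogonal_def
        by (auto simp: inner_commute)
      show "\<forall>b\<in>insert u B'. norm b = 1 \<and> H *v b = (b \<bullet> (H *v b)) *\<^sub>R b"
        using B'(3) un uH by auto
      show "V \<subseteq> span (insert u B')"
      proof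
        fix v assume v: "v \<in> V"
        have "v - (v \<bullet> u) *\<^sub>R u \<in> V'" unfolding V'_def using v uV less.prems(1) uu
          by (simp add: subspace_diff subspace_scale inner_diff_left)
        then have "v - (v \<bullet> u) *\<^sub>R u \<in> span (insert u B')"
          using B'(4) span_mono[of B' "insert u B'"] by auto
        moreover have "(v \<bullet> u) *\<^sub>R u \<in> span (insert u B')"
          by (simp add: span_base span_scale)
        ultimately have "(v - (v \<bullet> u) *\<^sub>R u) + (v \<bullet> u) *\<^sub>R u \<in> span (insert u B')"
          by (rule span_add)
        then show "v \<in> span (insert u B')" by simp
      qed
    qed
  qed
qed

lemma spectral:
  fixes H :: "real^'n^'n"
  assumes sym: "transpose H = H"
  shows "\<exists>(e::'n \<Rightarrow> real^'n) lam. (\<forall>i j. e i \<bullet> e j = (if i = j then 1 else 0)) \<and> (\<forall>i. H *v e i = lam i *\<^sub>R e i)"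
proof -
  obtain B where B: "pairwise orthogonal B"
      "\<forall>b\<in>B. norm b = 1 \<and> H *v b = (b \<bullet> (H *v b)) *\<^sub>R b" "UNIV \<subseteq> span B"
    using spectral_sub[OF sym, of UNIV] by auto
  have "0 \<notin> B" using B(2) by force
  then have ind: "independent B" using B(1) by (rule pairwise_orthogonal_independent[rotated])
  have fin: "finite B" using indep_card_eq_dim_span[OF ind] by simp
  have "card B = dim (UNIV :: (real^'n) set)"
    using ind B(3) by (intro basis_card_eq_dim) auto
  then have cB: "card B = CARD('n)" by (simp add: dim_UNIV)
  obtain h where h: "bij_betw h (UNIV::'n set) B"
    using finite_same_card_bij[of "UNIV::'n set" B] fin cB by auto
  have hB: "h i \<in> B" for i using h by (auto simp: bij_betw_def)
  have hinj: "h i = h j \<Longrightarrow> i = j" for i j using h by (auto simp: bij_betw_def inj_on_def)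
  have 1: "h i \<bullet> h j = (if i = j then 1 else 0)" for i j
    proof (cases "i = j")
      case True
      then show ?thesis using B(2) hB[of i] by (simp add: norm_eq_1)
    next
      case False
      then have "h i \<noteq> h j" using hinj by blast
      then show ?thesis using B(1) hB[of i] hB[of j] False
        unfolding pairwise_def orthogonal_def by auto
    qed
  have 2: "H *v h i = (h i \<bullet> (H *v h i)) *\<^sub>R h i" for i using B(2) hB[of i] by auto
  show ?thesis
    apply (rule exI[of _ h], rule exI[of _ "\<lambda>i. h i \<bullet> (H *v h i)"])
    using 1 2 by auto
qed

lemma poly_det:
  fixes M :: "real poly^'n^'n"
  shows "poly (det M) x = det (\<chi> i j. poly (M$i$j) x)"
  unfolding det_def by (simp add: poly_sum poly_prod)

lemma charpoly_eval:
  fixes A :: "real^'n^'n"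
  shows "poly (charpoly A) x = det (\<chi> i j. (if i = j then x else 0) - A$i$j)"
  unfolding charpoly_def poly_det by (intro arg_cong[where f=det]) (simp add: vec_eq_iff)

lemma det_eig:
  fixes H :: "real^'n^'n" and e :: "'n \<Rightarrow> real^'n"
  assumes orth: "\<And>i j. e i \<bullet> e j = (if i = j then 1 else 0)"
    and eig: "\<And>i. H *v e i = lam i *\<^sub>R e i"
  shows "det (\<chi> i j. (if i = j then x else 0) - H$i$j) = (\<Prod>i\<in>UNIV. x - lam i)"
proof -
  define M where "M = ((\<chi> i j. (if i = j then x else 0) - H$i$j) :: real^'n^'n)"
  define Q where "Q = ((\<chi> i j. e j $ i) :: real^'n^'n)"
  have MQ: "(M ** Q) $ k $ j = (M *v e j) $ k" for k j
    unfolding M_def Q_def matrix_matrix_mult_def matrix_vector_mult_def by simp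
  have QT: "transpose Q $ i $ k = e i $ k" for i k by (simp add: transpose_def Q_def)
  have Me: "M *v e j = (x - lam j) *\<^sub>R e j" for j
  proof -
    have "M *v e j = x *\<^sub>R e j - H *v e j"
      unfolding M_def matrix_vector_mult_def
      by (simp add: vec_eq_iff left_diff_distrib sum_subtractf if_distrib[of "\<lambda>z. z * _"] if_distribR sum.delta cong: if_cong)
    then show ?thesis using eig[of j] by (simp add: algebra_simps)
  qed
  have QtMQ: "transpose Q ** (M ** Q) = (\<chi> i j. if i = j then x - lam j else 0)"
  proof -
    have "(transpose Q ** (M ** Q)) $ i $ j = e i \<bullet> (M *v e j)" for i j
      unfolding matrix_matrix_mult_def[of "transpose Q"] inner_vec_def
      by (simp add: MQ QT)
    then show ?thesis using orth by (simp add: vec_eq_iff Me)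
  qed
  have QtQ: "transpose Q ** Q = mat 1"
  proof -
    have "(transpose Q ** Q) $ i $ j = e i \<bullet> e j" for i j
      unfolding matrix_matrix_mult_def inner_vec_def
      by (simp add: transpose_def Q_def)
    then show ?thesis using orth by (simp add: vec_eq_iff mat_def)
  qed
  have dQ: "det Q * det Q = 1"
    using arg_cong[OF QtQ, of det] by (simp add: det_mul det_transpose det_I)
  have "det (transpose Q ** (M ** Q)) = det M * (det Q * det Q)"
    by (simp add: det_mul det_transpose)
  then have "det M = det (transpose Q ** (M ** Q))" using dQ by simp
  also have "\<dots> = (\<Prod>i\<in>UNIV. x - lam i)" unfolding QtMQ
    by (subst det_diagonal) auto
  finally show ?thesis unfolding M_def .
qed

lemma image_mset_sum_single:
  "finite A \<Longrightarrow> image_mset f (mset_set A) = (\<Sum>x\<in>A. {#f x#})"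
  by (induction A rule: finite_induct) auto

lemma proots_charpoly:
  fixes H :: "real^'n^'n" and e :: "'n \<Rightarrow> real^'n"
  assumes orth: "\<And>i j. e i \<bullet> e j = (if i = j then 1 else 0)"
    and eig: "\<And>i. H *v e i = lam i *\<^sub>R e i"
  shows "proots (charpoly H) = image_mset lam (mset_set UNIV)"
proof -
  have "charpoly H = (\<Prod>i\<in>UNIV. [:- lam i, 1:])"
  proof -
    have "poly (charpoly H) = poly (\<Prod>i\<in>UNIV. [:- lam i, 1:])"
      by (rule ext) (simp add: charpoly_eval det_eig[OF orth eig] poly_prod)
    then show ?thesis by (simp add: poly_eq_poly_eq_iff)
  qed
  then have "proots (charpoly H) = (\<Sum>i\<in>UNIV. proots [:- lam i, 1:])"
    by (simp add: proots_prod)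
  also have "\<dots> = (\<Sum>i\<in>UNIV. {#lam i#})" by (simp add: proots_linear_factor)
  finally show ?thesis using image_mset_sum_single[of "UNIV::'n set" lam] by simp
qed

lemma mset_sub_image:
  "N \<subseteq># image_mset f A \<Longrightarrow> \<exists>B. B \<subseteq># A \<and> image_mset f B = N"
proof (induction N arbitrary: A)
  case empty
  then show ?case by (intro exI[of _ "{#}"]) auto
next
  case (add x N)
  have "x \<in># image_mset f A" using add.prems by (meson insert_subset_eq_iff)
  then obtain a where a: "a \<in># A" "f a = x" by auto
  have "N \<subseteq># image_mset f A - {#x#}" using add.prems
    by (simp add: insert_subset_eq_iff)
  also have "image_mset f A - {#x#} = image_mset f (A - {#a#})"
    using a by (simp add: image_mset_Diff)
  finally obtain B where B: "B \<subseteq># A - {#a#}" "image_mset f B = N" using add.IH by blast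
  show ?case
  proof (intro exI[of _ "add_mset a B"] conjI)
    show "add_mset a B \<subseteq># A" using B(1) a(1)
      by (metis insert_DiffM insert_subset_eq_iff mset_subset_eq_add_mset_cancel)
    show "image_mset f (add_mset a B) = add_mset x N" using B(2) a(2) by simp
  qed
qed

lemma take_sorted_sum:
  fixes lam :: "'n::finite \<Rightarrow> real"
  assumes "k \<le> CARD('n)"
  shows "\<exists>S. card S = k \<and>
    sum_list (take k (sorted_list_of_multiset (image_mset lam (mset_set UNIV)))) = (\<Sum>i\<in>S. lam i)"
proof -
  define L where "L = sorted_list_of_multiset (image_mset lam (mset_set (UNIV::'n set)))"
  have mL: "mset L = image_mset lam (mset_set UNIV)" unfolding L_def by simp
  have lenL: "length L = CARD('n)" using arg_cong[OF mL, of size] by simp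
  have "mset (take k L) \<subseteq># mset L"
    by (metis append_take_drop_id mset_append mset_subset_eq_add_left)
  then obtain B where B: "B \<subseteq># mset_set UNIV" "image_mset lam B = mset (take k L)"
    using mset_sub_image[of "mset (take k L)" lam "mset_set UNIV"] mL by auto
  define S where "S = set_mset B"
  have BS: "B = mset_set S"
  proof (rule multiset_eqI)
    fix a
    have "count B a \<le> count (mset_set (UNIV::'n set)) a" using B(1) by (rule mset_subset_eq_count)
    then have "count B a \<le> 1" by (simp add: count_mset_set)

    show "count B a = count (mset_set S) a"
    proof (cases "a \<in># B")
      case True
      then have "0 < count B a" by (simp only: count_greater_zero_iff)
      with \<open>count B a \<le> 1\<close> have "count B a = 1" by linarith
      then show ?thesis using True unfolding S_def by (simp add: count_mset_set)
    next
      case False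
      then show ?thesis unfolding S_def by (simp add: count_mset_set not_in_iff)
    qed
  qed
  have "card S = size B" unfolding BS by simp
  also have "\<dots> = size (mset (take k L))" using arg_cong[OF B(2), of size] by simp
  also have "\<dots> = k" using lenL assms by simp
  finally have cS: "card S = k" .
  have "sum_list (take k L) = sum_mset (mset (take k L))" by (simp add: sum_mset_sum_list)
  also have "\<dots> = sum_mset (image_mset lam B)" using B(2) by simp
  also have "\<dots> = (\<Sum>i\<in>S. lam i)" unfolding BS by (simp add: sum_unfold_sum_mset)
  finally show ?thesis using cS unfolding L_def by blast
qed

lemma bessel:
  fixes e :: "'n \<Rightarrow> real^'n"
  assumes orth: "\<And>i j. e i \<bullet> e j = (if i = j then 1 else 0)"
  shows "(\<Sum>i\<in>S. (z \<bullet> e i)^2) \<le> z \<bullet> z"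
proof -
  have fS: "finite S" by simp
  define p where "p = (\<Sum>i\<in>S. (z \<bullet> e i) *\<^sub>R e i)"
  have pp: "p \<bullet> p = (\<Sum>i\<in>S. (z \<bullet> e i)^2)"
    unfolding p_def by (simp add: inner_sum_left inner_sum_right orth if_distrib power2_eq_square sum.delta cong: if_cong)
  have zp: "z \<bullet> p = (\<Sum>i\<in>S. (z \<bullet> e i)^2)"
    unfolding p_def by (simp add: inner_sum_right power2_eq_square)
  have "0 \<le> (z - p) \<bullet> (z - p)" by simp
  also have "\<dots> = z \<bullet> z - 2 * (z \<bullet> p) + p \<bullet> p"
    by (simp add: inner_diff_left inner_diff_right inner_commute)
  finally show ?thesis using pp zp by simp
qed

lemma kyfan:
  fixes H :: "real^'n^'n" and z :: "'j \<Rightarrow> real^'n"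
  assumes sym: "transpose H = H" and kn: "k \<le> CARD('n)" and fJ: "finite J"
    and bpos: "\<And>j. j \<in> J \<Longrightarrow> b j \<ge> 0"
    and quad: "\<And>v. v \<bullet> (H *v v) \<ge> a * (v \<bullet> v) - (\<Sum>j\<in>J. b j * (z j \<bullet> v)^2)"
  shows "Pk_minus k H \<ge> real k * a - (\<Sum>j\<in>J. b j * (z j \<bullet> z j))"
proof -
  obtain e :: "'n \<Rightarrow> real^'n" and lam where orth: "\<And>i j. e i \<bullet> e j = (if i = j then 1 else 0)"
    and eig: "\<And>i. H *v e i = lam i *\<^sub>R e i"
    using spectral[OF sym] by blast
  obtain S where cS: "card S = k" and PS:
    "sum_list (take k (sorted_list_of_multiset (image_mset lam (mset_set UNIV)))) = (\<Sum>i\<in>S. lam i)"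
    using take_sorted_sum[OF kn] by blast
  have Pk: "Pk_minus k H = (\<Sum>i\<in>S. lam i)"
    unfolding Pk_minus_def eigenvalues_sorted_def proots_charpoly[OF orth eig] PS ..
  have li: "lam i \<ge> a - (\<Sum>j\<in>J. b j * (z j \<bullet> e i)^2)" for i
  proof -
    have "lam i = e i \<bullet> (H *v e i)" using orth[of i i] by (simp add: eig)
    then show ?thesis using quad[of "e i"] orth[of i i] by simp
  qed
  have 1: "(\<Sum>i\<in>S. lam i) \<ge> (\<Sum>i\<in>S. a - (\<Sum>j\<in>J. b j * (z j \<bullet> e i)^2))"
    by (rule sum_mono) (rule li)
  have 2: "(\<Sum>i\<in>S. a - (\<Sum>j\<in>J. b j * (z j \<bullet> e i)^2)) =
      real k * a - (\<Sum>j\<in>J. b j * (\<Sum>i\<in>S. (z j \<bullet> e i)^2))"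
    using cS by (simp add: sum_subtractf sum_distrib_left sum.swap[of _ S J])
  have 3: "(\<Sum>j\<in>J. b j * (\<Sum>i\<in>S. (z j \<bullet> e i)^2)) \<le> (\<Sum>j\<in>J. b j * (z j \<bullet> z j))"
    by (intro sum_mono mult_left_mono bessel[OF orth] bpos)
  show ?thesis unfolding Pk using 1 2 3 by linarith
qed

lemma mvt_line:
  fixes f :: "real^'n \<Rightarrow> real"
  assumes t: "t > 0"
    and der: "\<And>s. 0 \<le> s \<Longrightarrow> s \<le> t \<Longrightarrow> (f has_derivative (\<lambda>v. D (x + s *\<^sub>R d) \<bullet> v)) (at (x + s *\<^sub>R d))"
  shows "\<exists>\<sigma>. 0 < \<sigma> \<and> \<sigma> < t \<and> f (x + t *\<^sub>R d) - f x = t * (D (x + \<sigma> *\<^sub>R d) \<bullet> d)"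
proof -
  have "\<exists>s\<in>{0<..<t}. (\<lambda>s. f (x + s *\<^sub>R d)) t - (\<lambda>s. f (x + s *\<^sub>R d)) 0 =
          (\<lambda>u. D (x + s *\<^sub>R d) \<bullet> (u *\<^sub>R d)) (t - 0)"
  proof (rule mvt_simple[OF t])
    fix s assume s: "0 \<le> s" "s \<le> t"
    have l: "((\<lambda>s. x + s *\<^sub>R d) has_derivative (\<lambda>u. u *\<^sub>R d)) (at s within {0..t})"
      by (auto intro!: derivative_eq_intros)
    show "((\<lambda>s. f (x + s *\<^sub>R d)) has_derivative (\<lambda>u. D (x + s *\<^sub>R d) \<bullet> (u *\<^sub>R d))) (at s within {0..t})"
      using has_derivative_compose[OF l der[OF s]] by simp
  qed
  then show ?thesis by auto
qed

lemma deriv_comp_nth: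
  assumes "(F has_derivative (\<lambda>v. M *v v)) (at y)"
  shows "((\<lambda>y. F y $ i) has_derivative (\<lambda>v. (\<chi> j. M $ i $ j) \<bullet> v)) (at y)"
proof -
  have "((\<lambda>y. F y $ i) has_derivative (\<lambda>v. (M *v v) $ i)) (at y)"
    using bounded_linear.has_derivative[OF bounded_linear_vec_nth assms] .
  moreover have "(\<lambda>v. (M *v v) $ i) = (\<lambda>v. (\<chi> j. M $ i $ j) \<bullet> v)"
    by (auto simp: matrix_vector_mult_def inner_vec_def)
  ultimately show ?thesis by simp
qed

lemma deriv_translate:
  assumes "(f has_derivative (\<lambda>v. D (y + c) \<bullet> v)) (at (y + c))"
  shows "((\<lambda>y. f (y + c)) has_derivative (\<lambda>v. D (y + c) \<bullet> v)) (at y)"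
proof -
  have l: "((\<lambda>y. y + c) has_derivative (\<lambda>v. v)) (at y)" by (auto intro!: derivative_eq_intros)
  show ?thesis using has_derivative_compose[OF l assms] by simp
qed

lemma schwarz_delta:
  fixes phi :: "real^'n \<Rightarrow> real"
  assumes der: "\<And>y. y \<in> ball x0 r \<Longrightarrow> (phi has_derivative (\<lambda>v. Dphi y \<bullet> v)) (at y) \<and>
                (Dphi has_derivative (\<lambda>v. Hphi y *v v)) (at y)"
    and t: "0 < t" "2 * t < r"
  shows "\<exists>P. dist P x0 \<le> 2 * t \<and>
    phi (x0 + t *\<^sub>R axis i 1 + t *\<^sub>R axis j 1) - phi (x0 + t *\<^sub>R axis i 1)
      - phi (x0 + t *\<^sub>R axis j 1) + phi x0 = t^2 * Hphi P $ i $ j"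
proof -
  define a :: "real^'n" where "a = axis i 1"
  define b :: "real^'n" where "b = axis j 1"
  have na: "norm a = 1" and nb: "norm b = 1" unfolding a_def b_def by (simp_all add: norm_axis_1)
  have inball: "x0 + \<alpha> *\<^sub>R a + \<beta> *\<^sub>R b \<in> ball x0 r" if "0 \<le> \<alpha>" "\<alpha> \<le> t" "0 \<le> \<beta>" "\<beta> \<le> t" for \<alpha> \<beta>
  proof -
    have "norm (\<alpha> *\<^sub>R a + \<beta> *\<^sub>R b) \<le> norm (\<alpha> *\<^sub>R a) + norm (\<beta> *\<^sub>R b)" by (rule norm_triangle_ineq)
    also have "\<dots> = \<alpha> + \<beta>" using na nb that by simp
    moreover have "norm (- (\<alpha> *\<^sub>R a) - \<beta> *\<^sub>R b) = norm (\<alpha> *\<^sub>R a + \<beta> *\<^sub>R b)"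
      by (metis minus_add_distrib norm_minus_cancel diff_conv_add_uminus)
    ultimately show ?thesis using that t by (auto simp: mem_ball dist_norm)
  qed
  define F1 where "F1 = (\<lambda>y. phi (y + t *\<^sub>R b) - phi y)"
  define D1 where "D1 = (\<lambda>y. Dphi (y + t *\<^sub>R b) - Dphi y)"
  have "\<exists>\<sigma>. 0 < \<sigma> \<and> \<sigma> < t \<and> F1 (x0 + t *\<^sub>R a) - F1 x0 = t * (D1 (x0 + \<sigma> *\<^sub>R a) \<bullet> a)"
  proof (rule mvt_line[OF t(1)])
    fix s assume s: "0 \<le> s" "s \<le> t"
    let ?y = "x0 + s *\<^sub>R a"
    have y1: "?y + t *\<^sub>R b \<in> ball x0 r" using inball[of s t] s t by simp
    have y2: "?y \<in> ball x0 r" using inball[of s 0] s t by simp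
    have d1: "((\<lambda>y. phi (y + t *\<^sub>R b)) has_derivative (\<lambda>v. Dphi (?y + t *\<^sub>R b) \<bullet> v)) (at ?y)"
      by (rule deriv_translate) (use der[OF y1] in auto)
    have d2: "(phi has_derivative (\<lambda>v. Dphi ?y \<bullet> v)) (at ?y)" using der[OF y2] by auto
    have "(F1 has_derivative (\<lambda>v. Dphi (?y + t *\<^sub>R b) \<bullet> v - Dphi ?y \<bullet> v)) (at ?y)"
      unfolding F1_def by (rule has_derivative_diff[OF d1 d2])
    then show "(F1 has_derivative (\<lambda>v. D1 ?y \<bullet> v)) (at ?y)"
      unfolding D1_def by (simp add: inner_diff_left)
  qed
  then obtain \<sigma> where \<sigma>: "0 < \<sigma>" "\<sigma> < t" and e1: "F1 (x0 + t *\<^sub>R a) - F1 x0 = t * (D1 (x0 + \<sigma> *\<^sub>R a) \<bullet> a)"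
    by blast
  define F2 where "F2 = (\<lambda>y. Dphi y $ i)"
  define D2 where "D2 = (\<lambda>y. (\<chi> k. Hphi y $ i $ k) :: real^'n)"
  have "\<exists>\<tau>. 0 < \<tau> \<and> \<tau> < t \<and> F2 ((x0 + \<sigma> *\<^sub>R a) + t *\<^sub>R b) - F2 (x0 + \<sigma> *\<^sub>R a) =
          t * (D2 ((x0 + \<sigma> *\<^sub>R a) + \<tau> *\<^sub>R b) \<bullet> b)"
  proof (rule mvt_line[OF t(1)])
    fix s assume s: "0 \<le> s" "s \<le> t"
    have y: "(x0 + \<sigma> *\<^sub>R a) + s *\<^sub>R b \<in> ball x0 r" using inball[of \<sigma> s] s \<sigma> by simp
    show "(F2 has_derivative (\<lambda>v. D2 ((x0 + \<sigma> *\<^sub>R a) + s *\<^sub>R b) \<bullet> v)) (at ((x0 + \<sigma> *\<^sub>R a) + s *\<^sub>R b))"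
      unfolding F2_def D2_def by (rule deriv_comp_nth) (use der[OF y] in auto)
  qed
  then obtain \<tau> where \<tau>: "0 < \<tau>" "\<tau> < t" and e2: "F2 ((x0 + \<sigma> *\<^sub>R a) + t *\<^sub>R b) - F2 (x0 + \<sigma> *\<^sub>R a) =
          t * (D2 ((x0 + \<sigma> *\<^sub>R a) + \<tau> *\<^sub>R b) \<bullet> b)" by blast
  define P where "P = (x0 + \<sigma> *\<^sub>R a) + \<tau> *\<^sub>R b"
  have "D1 (x0 + \<sigma> *\<^sub>R a) \<bullet> a = F2 ((x0 + \<sigma> *\<^sub>R a) + t *\<^sub>R b) - F2 (x0 + \<sigma> *\<^sub>R a)"
    unfolding D1_def F2_def a_def by (simp add: inner_axis inner_diff_left)
  also have "\<dots> = t * Hphi P $ i $ j" using e2 unfolding P_def D2_def b_def by (simp add: inner_axis)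
  finally have e3: "D1 (x0 + \<sigma> *\<^sub>R a) \<bullet> a = t * Hphi P $ i $ j" .
  have "dist P x0 \<le> 2 * t"
  proof -
    have "dist P x0 < r" using inball[of \<sigma> \<tau>] \<sigma> \<tau> unfolding P_def by (simp add: dist_commute)
    have "norm (\<sigma> *\<^sub>R a + \<tau> *\<^sub>R b) \<le> norm (\<sigma> *\<^sub>R a) + norm (\<tau> *\<^sub>R b)" by (rule norm_triangle_ineq)
    also have "\<dots> = \<sigma> + \<tau>" using na nb \<sigma> \<tau> by simp
    finally show ?thesis using \<sigma> \<tau> unfolding P_def by (simp add: dist_norm add.assoc)
  qed
  moreover have "phi (x0 + t *\<^sub>R axis i 1 + t *\<^sub>R axis j 1) - phi (x0 + t *\<^sub>R axis i 1)
      - phi (x0 + t *\<^sub>R axis j 1) + phi x0 = F1 (x0 + t *\<^sub>R a) - F1 x0"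
    unfolding F1_def a_def b_def by (simp add: algebra_simps)
  ultimately show ?thesis using e1 e3 by (intro exI[of _ P]) (simp add: power2_eq_square)
qed

lemma abs_tri_aux: "\<bar>p - x\<bar> < \<bar>x - y\<bar> / 2 \<Longrightarrow> \<bar>p - y\<bar> < \<bar>x - y\<bar> / 2 \<Longrightarrow> False" for p x y :: real
  by (auto simp: abs_if split: if_splits)

lemma schwarz:
  fixes phi :: "real^'n \<Rightarrow> real"
  assumes C2: "C2_near phi x0 Dphi Hphi"
  shows "transpose (Hphi x0) = Hphi x0"
proof -
  obtain U where U: "open U" "x0 \<in> U" and der: "\<forall>y\<in>U. (phi has_derivative (\<lambda>v. Dphi y \<bullet> v)) (at y) \<and>
                (Dphi has_derivative (\<lambda>v. Hphi y *v v)) (at y)" and cont: "continuous_on U Hphi"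
    using C2 unfolding C2_near_def by blast
  obtain r where r: "r > 0" "ball x0 r \<subseteq> U" using U open_contains_ball by blast
  have der': "\<And>y. y \<in> ball x0 r \<Longrightarrow> (phi has_derivative (\<lambda>v. Dphi y \<bullet> v)) (at y) \<and>
                (Dphi has_derivative (\<lambda>v. Hphi y *v v)) (at y)" using der r by blast
  have ic: "isCont Hphi x0" using cont U continuous_on_eq_continuous_at by blast
  have comp: "\<exists>P Q. dist P x0 \<le> 2 * t \<and> dist Q x0 \<le> 2 * t \<and> Hphi P $ i $ j = Hphi Q $ j $ i"
    if t: "0 < t" "2 * t < r" for t i j
  proof -
    obtain P where P: "dist P x0 \<le> 2 * t" and eP: "phi (x0 + t *\<^sub>R axis i 1 + t *\<^sub>R axis j 1) - phi (x0 + t *\<^sub>R axis i 1)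
      - phi (x0 + t *\<^sub>R axis j 1) + phi x0 = t^2 * Hphi P $ i $ j"
      using schwarz_delta[OF der' t, where i=i and j=j] by blast
    obtain Q where Q: "dist Q x0 \<le> 2 * t" and eQ: "phi (x0 + t *\<^sub>R axis j 1 + t *\<^sub>R axis i 1) - phi (x0 + t *\<^sub>R axis j 1)
      - phi (x0 + t *\<^sub>R axis i 1) + phi x0 = t^2 * Hphi Q $ j $ i"
      using schwarz_delta[OF der' t, where i=j and j=i] by blast
    have "t^2 * Hphi P $ i $ j = t^2 * Hphi Q $ j $ i"
      using eP eQ by (simp add: algebra_simps)
    then have "Hphi P $ i $ j = Hphi Q $ j $ i" using t by simp
    then show ?thesis using P Q by blast
  qed
  have "Hphi x0 $ i $ j = Hphi x0 $ j $ i" for i j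
  proof (rule ccontr)
    assume ne: "Hphi x0 $ i $ j \<noteq> Hphi x0 $ j $ i"
    define \<epsilon> where "\<epsilon> = \<bar>Hphi x0 $ i $ j - Hphi x0 $ j $ i\<bar> / 2"
    have \<epsilon>: "\<epsilon> > 0" using ne unfolding \<epsilon>_def by simp
    obtain \<delta> where \<delta>: "\<delta> > 0" and c: "\<And>y. dist y x0 < \<delta> \<Longrightarrow> dist (Hphi y) (Hphi x0) < \<epsilon>"
      using ic \<epsilon> unfolding continuous_at_eps_delta by blast
    have cc: "\<bar>Hphi y $ p $ q - Hphi x0 $ p $ q\<bar> < \<epsilon>" if "dist y x0 < \<delta>" for y p q
    proof -
      have "\<bar>(Hphi y - Hphi x0) $ p $ q\<bar> \<le> norm ((Hphi y - Hphi x0) $ p)" by (rule component_le_norm_cart)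
      also have "\<dots> \<le> norm (Hphi y - Hphi x0)" by (rule Finite_Cartesian_Product.norm_nth_le)
      also have "\<dots> < \<epsilon>" using c[OF that] by (simp add: dist_norm)
      finally show ?thesis by simp
    qed
    define t where "t = min (\<delta> / 4) (r / 4)"
    have t: "0 < t" "2 * t < r" "2 * t < \<delta>" unfolding t_def using \<delta> r by auto
    obtain P Q where PQ: "dist P x0 \<le> 2 * t" "dist Q x0 \<le> 2 * t" "Hphi P $ i $ j = Hphi Q $ j $ i"
      using comp[OF t(1,2)] by blast
    have "\<bar>Hphi P $ i $ j - Hphi x0 $ i $ j\<bar> < \<epsilon>" using cc[of P i j] PQ(1) t by simp
    moreover have "\<bar>Hphi Q $ j $ i - Hphi x0 $ j $ i\<bar> < \<epsilon>" using cc[of Q j i] PQ(2) t by simp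
    ultimately show False using PQ(3) unfolding \<epsilon>_def using abs_tri_aux by metis
  qed
  then show ?thesis by (simp add: vec_eq_iff transpose_def)
qed

lemma second_deriv_min:
  fixes \<psi> \<psi>' :: "real \<Rightarrow> real"
  assumes d: "d > 0" and mn: "\<And>t. \<bar>t\<bar> < d \<Longrightarrow> \<psi> 0 \<le> \<psi> t"
    and der: "\<And>t. \<bar>t\<bar> < d \<Longrightarrow> (\<psi> has_real_derivative \<psi>' t) (at t)"
    and d2: "(\<psi>' has_real_derivative L) (at 0)"
  shows "\<psi>' 0 = 0 \<and> L \<ge> 0"
proof -
  have z: "\<psi>' 0 = 0"
    by (rule DERIV_local_min[OF der[of 0] d]) (use d mn in auto)
  have "L \<ge> 0"
  proof (rule ccontr)
    assume "\<not> L \<ge> 0"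
    then have L: "L < 0" by simp
    have "((\<lambda>y. (\<psi>' y - \<psi>' 0) / (y - 0)) \<longlongrightarrow> L) (at 0)"
      using d2 by (simp add: has_field_derivative_iff)
    then have "eventually (\<lambda>y. (\<psi>' y - \<psi>' 0) / (y - 0) < L / 2) (at 0)"
      using L by (intro order_tendstoD) auto
    then obtain e where e: "e > 0" and ev: "\<And>y. y \<noteq> 0 \<Longrightarrow> dist y 0 < e \<Longrightarrow> (\<psi>' y - \<psi>' 0) / (y - 0) < L / 2"
      unfolding eventually_at by blast
    define t0 where "t0 = min e d / 2"
    have t0: "0 < t0" "t0 < e" "t0 < d" unfolding t0_def using e d by auto
    have "\<exists>z>0. z < t0 \<and> \<psi> t0 - \<psi> 0 = (t0 - 0) * \<psi>' z"
      by (rule MVT2) (use der t0 in auto)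
    then obtain \<xi> where \<xi>: "0 < \<xi>" "\<xi> < t0" and eq: "\<psi> t0 - \<psi> 0 = t0 * \<psi>' \<xi>" by auto
    have "\<psi>' \<xi> / \<xi> < L / 2" using ev[of \<xi>] \<xi> t0 z by simp
    then have a: "\<psi>' \<xi> * 2 < L * \<xi>" using \<xi> by (simp add: divide_less_eq)
    have "L * \<xi> < 0" using \<xi> L by (simp add: mult_neg_pos)
    then have "\<psi>' \<xi> < 0" using a by linarith
    then have "t0 * \<psi>' \<xi> < 0" using t0 by (simp add: mult_pos_neg)
    then have "\<psi> t0 < \<psi> 0" using eq by linarith
    moreover have "\<psi> 0 \<le> \<psi> t0" using mn t0 by simp
    ultimately show False by simp
  qed
  then show ?thesis using z by simp
qed

lemma line_deriv:
  fixes f :: "real^'n \<Rightarrow> real"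
  assumes "(f has_derivative (\<lambda>u. D \<bullet> u)) (at (x0 + t *\<^sub>R v))"
  shows "((\<lambda>t. f (x0 + t *\<^sub>R v)) has_real_derivative (D \<bullet> v)) (at t)"
proof -
  have l: "((\<lambda>t. x0 + t *\<^sub>R v) has_derivative (\<lambda>u. u *\<^sub>R v)) (at t)"
    by (auto intro!: derivative_eq_intros)
  have "((\<lambda>t. f (x0 + t *\<^sub>R v)) has_derivative (\<lambda>u. D \<bullet> (u *\<^sub>R v))) (at t)"
    using has_derivative_compose[OF l assms] .
  moreover have "(\<lambda>u. D \<bullet> (u *\<^sub>R v)) = (*) (D \<bullet> v)" by (auto simp: mult.commute)
  ultimately show ?thesis by (simp add: has_field_derivative_def)
qed

lemma line_deriv_vec:
  fixes F :: "real^'n \<Rightarrow> real^'n"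
  assumes "(F has_derivative (\<lambda>u. M *v u)) (at x0)"
  shows "((\<lambda>t. F (x0 + t *\<^sub>R v) \<bullet> v) has_real_derivative ((M *v v) \<bullet> v)) (at 0)"
proof -
  have l: "((\<lambda>t. x0 + t *\<^sub>R v) has_derivative (\<lambda>u. u *\<^sub>R v)) (at 0)"
    by (auto intro!: derivative_eq_intros)
  have a: "(F has_derivative (\<lambda>u. M *v u)) (at (x0 + 0 *\<^sub>R v))" using assms by simp
  have "((\<lambda>t. F (x0 + t *\<^sub>R v)) has_derivative (\<lambda>u. M *v (u *\<^sub>R v))) (at 0)"
    using has_derivative_compose[OF l a] .
  from bounded_linear.has_derivative[OF bounded_linear_inner_left this]
  have "((\<lambda>t. F (x0 + t *\<^sub>R v) \<bullet> v) has_derivative (\<lambda>u. (M *v (u *\<^sub>R v)) \<bullet> v)) (at 0)" .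
  moreover have "(\<lambda>u. (M *v (u *\<^sub>R v)) \<bullet> v) = (*) ((M *v v) \<bullet> v)"
    by (auto simp: matrix_vector_mult_scaleR mult.commute)
  ultimately show ?thesis by (simp add: has_field_derivative_def)
qed

lemma touch:
  fixes w phi :: "real^'n \<Rightarrow> real"
  assumes \<Omega>: "open \<Omega>" "x0 \<in> \<Omega>" and C2: "C2_near phi x0 Dphi Hphi"
    and tmax: "\<exists>r>0. \<forall>y\<in>\<Omega> \<inter> ball x0 r. w y - phi y \<le> w x0 - phi x0"
    and wder: "\<And>y. y \<in> ball x0 \<rho> \<Longrightarrow> (w has_derivative (\<lambda>v. G y \<bullet> v)) (at y)" and \<rho>: "\<rho> > 0"
    and w2: "\<And>v. ((\<lambda>t. G (x0 + t *\<^sub>R v) \<bullet> v) has_real_derivative q v) (at 0)"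
  shows "Dphi x0 = G x0 \<and> (\<forall>v. q v \<le> v \<bullet> (Hphi x0 *v v))"
proof -
  obtain U where U: "open U" "x0 \<in> U" and der: "\<forall>y\<in>U. (phi has_derivative (\<lambda>v. Dphi y \<bullet> v)) (at y) \<and>
                (Dphi has_derivative (\<lambda>v. Hphi y *v v)) (at y)"
    using C2 unfolding C2_near_def by blast
  obtain r where r: "r > 0" "\<forall>y\<in>\<Omega> \<inter> ball x0 r. w y - phi y \<le> w x0 - phi x0" using tmax by blast
  obtain r1 where r1: "r1 > 0" "ball x0 r1 \<subseteq> U" using U open_contains_ball by blast
  obtain r2 where r2: "r2 > 0" "ball x0 r2 \<subseteq> \<Omega>" using \<Omega> open_contains_ball by blast
  define R0 where "R0 = min (min r r1) (min r2 \<rho>)"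
  have R0: "R0 > 0" "R0 \<le> r" "R0 \<le> r1" "R0 \<le> r2" "R0 \<le> \<rho>" unfolding R0_def using r r1 r2 \<rho> by auto
  have main: "(Dphi x0 - G x0) \<bullet> v = 0 \<and> q v \<le> v \<bullet> (Hphi x0 *v v)" for v
  proof -
    define d where "d = R0 / (norm v + 1)"
    have nv: "norm v + 1 > 0" by (smt (verit) norm_ge_zero)
    have d: "d > 0" unfolding d_def using R0 nv by simp
    have inb: "x0 + t *\<^sub>R v \<in> ball x0 R0" if "\<bar>t\<bar> < d" for t
    proof -
      have "\<bar>t\<bar> * norm v \<le> \<bar>t\<bar> * (norm v + 1)" by (simp add: mult_left_mono)
      also have "\<dots> < d * (norm v + 1)" using that nv by simp
      also have "\<dots> = R0" unfolding d_def using nv by simp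
      finally show ?thesis by (simp add: dist_norm)
    qed
    define \<psi> where "\<psi> = (\<lambda>t. phi (x0 + t *\<^sub>R v) - w (x0 + t *\<^sub>R v))"
    define \<psi>' where "\<psi>' = (\<lambda>t. Dphi (x0 + t *\<^sub>R v) \<bullet> v - G (x0 + t *\<^sub>R v) \<bullet> v)"
    have mn: "\<psi> 0 \<le> \<psi> t" if "\<bar>t\<bar> < d" for t
    proof -
      have "x0 + t *\<^sub>R v \<in> \<Omega> \<inter> ball x0 r" using inb[OF that] R0 r2 by auto
      then show ?thesis using r(2) unfolding \<psi>_def by force
    qed
    have dd: "(\<psi> has_real_derivative \<psi>' t) (at t)" if "\<bar>t\<bar> < d" for t
    proof -
      have y: "x0 + t *\<^sub>R v \<in> U" "x0 + t *\<^sub>R v \<in> ball x0 \<rho>" using inb[OF that] R0 r1 by auto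
      have "((\<lambda>t. phi (x0 + t *\<^sub>R v)) has_real_derivative (Dphi (x0 + t *\<^sub>R v) \<bullet> v)) (at t)"
        by (rule line_deriv) (use der y in auto)
      moreover have "((\<lambda>t. w (x0 + t *\<^sub>R v)) has_real_derivative (G (x0 + t *\<^sub>R v) \<bullet> v)) (at t)"
        by (rule line_deriv) (use wder y in auto)
      ultimately show ?thesis unfolding \<psi>_def \<psi>'_def by (rule DERIV_diff)
    qed
    have "((\<lambda>t. Dphi (x0 + t *\<^sub>R v) \<bullet> v) has_real_derivative ((Hphi x0 *v v) \<bullet> v)) (at 0)"
      by (rule line_deriv_vec) (use der U in auto)
    then have d2: "(\<psi>' has_real_derivative ((Hphi x0 *v v) \<bullet> v - q v)) (at 0)"
      unfolding \<psi>'_def using w2[of v] by (rule DERIV_diff)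
    have "\<psi>' 0 = 0 \<and> (Hphi x0 *v v) \<bullet> v - q v \<ge> 0"
      by (rule second_deriv_min[OF d mn dd d2])
    then show ?thesis unfolding \<psi>'_def by (simp add: inner_diff_left inner_diff_right inner_commute)
  qed
  have "(Dphi x0 - G x0) \<bullet> (Dphi x0 - G x0) = 0" using main by blast
  then have "Dphi x0 = G x0" by simp
  then show ?thesis using main by blast
qed

lemma B_bound:
  fixes p s h r k :: real
  assumes p: "p \<ge> 0" and s: "s \<ge> 0" and h: "h \<ge> 0" and r: "r > 0" and kh: "k - h * sqrt s \<ge> 0"
  defines "t \<equiv> s + r^2"
  shows "2 * k * p - 4 * s * max (- (p * (h / (2 * sqrt t) - k / (2 * t)))) 0 - 2 * h * sqrt s * p
         \<ge> 2 * p * r^2 * (k - h * sqrt s) / t"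
proof -
  define \<sigma> where "\<sigma> = sqrt s"
  define u where "u = sqrt t"
  have r2: "r^2 > 0" using r by simp
  have t: "t > 0" unfolding t_def using assms(2) r2 by linarith
  have \<sigma>0: "\<sigma> \<ge> 0" unfolding \<sigma>_def using s by simp
  have u0: "u > 0" unfolding u_def using t by simp
  have ss: "\<sigma>^2 = s" unfolding \<sigma>_def using s by simp
  have uu: "u^2 = t" unfolding u_def using t by simp
  have \<sigma>u: "\<sigma> \<le> u" unfolding \<sigma>_def u_def t_def using r by (simp add: real_sqrt_le_mono)
  have rt: "r^2 \<le> t" unfolding t_def using s by simp
  have kh': "k - h * \<sigma> \<ge> 0" using kh unfolding \<sigma>_def .
  show ?thesis
  proof (cases "h / (2 * sqrt t) - k / (2 * t) \<ge> 0")
    case True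
    then have "- (p * (h / (2 * sqrt t) - k / (2 * t))) \<le> 0" using p by simp
    then have m: "max (- (p * (h / (2 * sqrt t) - k / (2 * t)))) 0 = 0" by simp
    define D where "D = k - h * \<sigma>"
    have D0: "D \<ge> 0" using kh' unfolding D_def .
    have "r^2 / t \<le> 1" using rt t by simp
    then have "(2 * p * D) * (r^2 / t) \<le> (2 * p * D) * 1"
      by (intro mult_left_mono) (use p D0 in auto)
    moreover have "2 * p * r^2 * D / t = (2 * p * D) * (r^2 / t)" by (simp add: mult_ac)
    ultimately have "2 * p * r^2 * D / t \<le> 2 * p * D" by linarith
    then have "2 * p * r^2 * (k - h * \<sigma>) / t \<le> 2 * p * (k - h * \<sigma>)" unfolding D_def .
    then show ?thesis unfolding m \<sigma>_def[symmetric] by (simp add: algebra_simps)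
  next
    case False
    then have "- (p * (h / (2 * sqrt t) - k / (2 * t))) \<ge> 0" using p
      by (simp add: mult_le_0_iff)
    then have m: "max (- (p * (h / (2 * sqrt t) - k / (2 * t)))) 0 = p * (k / (2 * t) - h / (2 * u))"
      unfolding u_def by (simp add: algebra_simps)
    have key: "k * t - s * (k - h * u) - h * \<sigma> * t \<ge> r^2 * (k - h * \<sigma>)"
    proof -
      have "k * t - s * (k - h * u) - h * \<sigma> * t = k * r^2 + h * \<sigma> * (\<sigma> * u - \<sigma>^2 - r^2)"
        unfolding t_def ss[symmetric] by (simp add: algebra_simps power2_eq_square)
      moreover have "h * \<sigma> * (\<sigma> * u - \<sigma>^2 - r^2) \<ge> h * \<sigma> * (-(r^2))"
      proof (rule mult_left_mono)
        show "-(r^2) \<le> \<sigma> * u - \<sigma>^2 - r^2" using \<sigma>0 \<sigma>u by (simp add: power2_eq_square mult_left_mono)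
        show "0 \<le> h * \<sigma>" using h \<sigma>0 by simp
      qed
      ultimately show ?thesis by (simp add: algebra_simps)
    qed
    have "2 * k * p - 4 * s * (p * (k / (2 * t) - h / (2 * u))) - 2 * h * \<sigma> * p
          = (2 * p / t) * (k * t - s * (k - h * u) - h * \<sigma> * t)"
      using t u0 uu by (simp add: field_simps power2_eq_square)
    also have "\<dots> \<ge> (2 * p / t) * (r^2 * (k - h * \<sigma>))"
      by (rule mult_left_mono[OF key]) (use p t in simp)
    finally show ?thesis unfolding m \<sigma>_def[symmetric] by (simp add: algebra_simps diff_divide_distrib add_divide_distrib)
  qed
qed

definition prof_p :: "real \<Rightarrow> real \<Rightarrow> real \<Rightarrow> real \<Rightarrow> real \<Rightarrow> real" where
  "prof_p k h lam r s = lam * (s + r^2) powr (-(k/2)) * exp (h * sqrt (s + r^2))"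

definition prof_q :: "real \<Rightarrow> real \<Rightarrow> real \<Rightarrow> real \<Rightarrow> real \<Rightarrow> real" where
  "prof_q k h lam r s = prof_p k h lam r s * (h / (2 * sqrt (s + r^2)) - k / (2 * (s + r^2)))"

lemma prof_p_deriv:
  assumes "s + r^2 > 0"
  shows "(prof_p k h lam r has_real_derivative prof_q k h lam r s) (at s)"
proof -
  let ?t = "s + r^2"
  have lin: "((\<lambda>s. s + r^2) has_real_derivative 1) (at s)" by (auto intro!: derivative_eq_intros)
  have g1: "((\<lambda>s. (s + r^2) powr (-(k/2))) has_real_derivative (-(k/2)) * ?t powr (-(k/2) - of_nat 1) * 1) (at s)"
    by (rule DERIV_fun_powr[OF lin]) (use assms in simp)
  have sq: "((\<lambda>s. sqrt (s + r^2)) has_real_derivative inverse (sqrt ?t) / 2 * 1) (at s)"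
    by (rule DERIV_chain2[OF DERIV_real_sqrt[OF assms] lin])
  have g2: "((\<lambda>s. exp (h * sqrt (s + r^2))) has_real_derivative exp (h * sqrt ?t) * (h * (inverse (sqrt ?t) / 2 * 1))) (at s)"
    by (rule DERIV_chain2[OF DERIV_exp DERIV_cmult[OF sq]])
  have "((\<lambda>s. lam * (s + r^2) powr (-(k/2)) * exp (h * sqrt (s + r^2))) has_real_derivative
     lam * ((-(k/2)) * ?t powr (-(k/2) - of_nat 1) * 1) * exp (h * sqrt ?t) +
     (exp (h * sqrt ?t) * (h * (inverse (sqrt ?t) / 2 * 1))) * (lam * ?t powr (-(k/2)))) (at s)"
    by (rule DERIV_mult[OF DERIV_cmult[OF g1, where c=lam] g2])
  moreover have "lam * ((-(k/2)) * ?t powr (-(k/2) - of_nat 1) * 1) * exp (h * sqrt ?t) +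
     (exp (h * sqrt ?t) * (h * (inverse (sqrt ?t) / 2 * 1))) * (lam * ?t powr (-(k/2))) = prof_q k h lam r s"
  proof -
    have pw: "?t powr (-(k/2) - of_nat 1) = ?t powr (-(k/2)) / ?t" using assms by (simp add: powr_diff)
    have S: "sqrt ?t > 0" using assms by simp
    have aux: "lam * (-(k/2) * (P / T) * 1) * E + E * (h * (inverse S / 2 * 1)) * (lam * P)
        = lam * P * E * (h / (2 * S) - k / (2 * T))" if "T > 0" "S > 0" for T S P E :: real
      using that by (simp add: field_simps)
    show ?thesis unfolding prof_q_def prof_p_def pw using aux[OF assms S] by simp
  qed
  ultimately show ?thesis unfolding prof_p_def[abs_def] by simp
qed

definition prof_F :: "real \<Rightarrow> real \<Rightarrow> real \<Rightarrow> real \<Rightarrow> real \<Rightarrow> real \<Rightarrow> real" where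
  "prof_F k h lam r R s = integral {-(r^2/2)..s} (prof_p k h lam r) - integral {-(r^2/2)..R^2} (prof_p k h lam r)"

lemma prof_p_cont:
  assumes "r > 0"
  shows "continuous_on {-(r^2/2)..b} (prof_p k h lam r)"
proof (rule continuous_at_imp_continuous_on, intro ballI)
  fix x assume "x \<in> {-(r^2/2)..b}"
  then have x: "x \<ge> -(r^2/2)" by simp
  have "r^2 > 0" using assms by simp
  then have "x + r^2 > 0" using x by linarith
  then show "isCont (prof_p k h lam r) x" using prof_p_deriv DERIV_isCont by blast
qed

lemma prof_p_nonneg:
  assumes "lam \<ge> 0"
  shows "prof_p k h lam r s \<ge> 0"
  unfolding prof_p_def using assms by simp

lemma prof_F_deriv:
  assumes r: "r > 0" and s: "s > -(r^2/2)"
  shows "(prof_F k h lam r R has_real_derivative prof_p k h lam r s) (at s)"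
proof -
  define b where "b = \<bar>s\<bar> + 1"
  have sb: "s \<in> {-(r^2/2)..b}" "s < b" using s unfolding b_def by auto
  have "((\<lambda>x. integral {-(r^2/2)..x} (prof_p k h lam r)) has_real_derivative prof_p k h lam r s)
          (at s within {-(r^2/2)..b})"
    by (rule integral_has_real_derivative[OF prof_p_cont[OF r] sb(1)])
  moreover have "at s within {-(r^2/2)..b} = at s"
    by (rule at_within_interior) (use s sb(2) in simp)
  ultimately have "((\<lambda>x. integral {-(r^2/2)..x} (prof_p k h lam r)) has_real_derivative prof_p k h lam r s) (at s)"
    by simp
  then have "((\<lambda>x. integral {-(r^2/2)..x} (prof_p k h lam r) - integral {-(r^2/2)..R^2} (prof_p k h lam r))
      has_real_derivative prof_p k h lam r s - 0) (at s)"
    by (intro DERIV_diff DERIV_const)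
  then show ?thesis unfolding prof_F_def[abs_def] by simp
qed

lemma prof_F_eq:
  assumes r: "r > 0" and s: "0 \<le> s" "s \<le> R^2"
  shows "prof_F k h lam r R s = - integral {s..R^2} (prof_p k h lam r)"
proof -
  have "integral {-(r^2/2)..s} (prof_p k h lam r) + integral {s..R^2} (prof_p k h lam r) =
        integral {-(r^2/2)..R^2} (prof_p k h lam r)"
  proof (rule Henstock_Kurzweil_Integration.integral_combine)
    have "r^2/2 \<ge> 0" by simp
    then show "-(r^2/2) \<le> s" using s by linarith
    show "s \<le> R^2" using s by simp
    show "prof_p k h lam r integrable_on {-(r^2/2)..R^2}"
      by (rule integrable_continuous_real[OF prof_p_cont[OF r]])
  qed
  then show ?thesis unfolding prof_F_def by simp
qed

lemma prof_int_le:
  assumes r: "r > 0" and lam: "lam \<ge> 0" and s: "0 \<le> s" "s \<le> R^2"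
  shows "0 \<le> integral {s..R^2} (prof_p k h lam r) \<and>
         integral {s..R^2} (prof_p k h lam r) \<le> integral {0..R^2} (prof_p k h lam r)"
proof -
  have int: "prof_p k h lam r integrable_on {c..d}" if "c \<ge> 0" for c d
  proof -
    have "continuous_on {-(r^2/2)..d} (prof_p k h lam r)" by (rule prof_p_cont[OF r])
    moreover have "r^2/2 \<ge> 0" by simp
    then have "-(r^2/2) \<le> c" using that by linarith
    then have "{c..d} \<subseteq> {-(r^2/2)..d}" by auto
    ultimately show ?thesis by (meson continuous_on_subset integrable_continuous_real)
  qed
  have "integral {0..s} (prof_p k h lam r) + integral {s..R^2} (prof_p k h lam r) =
        integral {0..R^2} (prof_p k h lam r)"
    by (rule Henstock_Kurzweil_Integration.integral_combine) (use s int in auto)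
  moreover have "0 \<le> integral {0..s} (prof_p k h lam r)"
    by (rule integral_nonneg) (use int prof_p_nonneg[OF lam] in auto)
  moreover have "0 \<le> integral {s..R^2} (prof_p k h lam r)"
    by (rule integral_nonneg) (use int s prof_p_nonneg[OF lam] in auto)
  ultimately show ?thesis by linarith
qed

lemma ftc_real:
  fixes G g :: "real \<Rightarrow> real"
  assumes "a \<le> b" and "\<And>x. a \<le> x \<Longrightarrow> x \<le> b \<Longrightarrow> (G has_real_derivative g x) (at x)"
  shows "integral {a..b} g = G b - G a"
proof -
  have "(g has_integral G b - G a) {a..b}"
  proof (rule fundamental_theorem_of_calculus[OF assms(1)])
    fix x assume "x \<in> {a..b}"
    then have "(G has_real_derivative g x) (at x)" using assms(2) by auto
    then show "(G has_vector_derivative g x) (at x within {a..b})"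
      by (simp add: has_real_derivative_iff_has_vector_derivative has_vector_derivative_at_within)
  qed
  then show ?thesis by (rule integral_unique)
qed

lemma int_powr_eq:
  fixes e r a b :: real
  assumes r: "r > 0" and ab: "0 \<le> a" "a \<le> b" and e: "e \<noteq> -1"
  shows "integral {a..b} (\<lambda>\<sigma>. (\<sigma> + r^2) powr e) = ((b + r^2) powr (e + 1) - (a + r^2) powr (e + 1)) / (e + 1)"
proof -
  have "integral {a..b} (\<lambda>\<sigma>. (\<sigma> + r^2) powr e) =
     (\<lambda>\<sigma>. (\<sigma> + r^2) powr (e + 1) / (e + 1)) b - (\<lambda>\<sigma>. (\<sigma> + r^2) powr (e + 1) / (e + 1)) a"
  proof (rule ftc_real[OF ab(2)])
    fix x assume x: "a \<le> x" "x \<le> b"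
    have pos: "x + r^2 > 0" using x ab r by (smt (verit) zero_less_power2)
    have lin: "((\<lambda>s. s + r^2) has_real_derivative 1) (at x)" by (auto intro!: derivative_eq_intros)
    have "((\<lambda>s. (s + r^2) powr (e + 1)) has_real_derivative (e + 1) * (x + r^2) powr (e + 1 - of_nat 1) * 1) (at x)"
      by (rule DERIV_fun_powr[OF lin]) (use pos in simp)
    then have "((\<lambda>s. (s + r^2) powr (e + 1) / (e + 1)) has_real_derivative ((e + 1) * (x + r^2) powr (e + 1 - of_nat 1) * 1) / (e + 1)) (at x)"
      by (rule DERIV_cdivide)
    moreover have "((e + 1) * (x + r^2) powr (e + 1 - of_nat 1) * 1) / (e + 1) = (x + r^2) powr e"
      using e by simp
    ultimately show "((\<lambda>s. (s + r^2) powr (e + 1) / (e + 1)) has_real_derivative (x + r^2) powr e) (at x)" by simp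
  qed
  then show ?thesis by (simp add: diff_divide_distrib)
qed

lemma int_inv_eq:
  fixes r a b :: real
  assumes r: "r > 0" and ab: "0 \<le> a" "a \<le> b"
  shows "integral {a..b} (\<lambda>\<sigma>. (\<sigma> + r^2) powr (-1)) = ln (b + r^2) - ln (a + r^2)"
proof (rule ftc_real[OF ab(2)])
  fix x assume x: "a \<le> x" "x \<le> b"
  have pos: "x + r^2 > 0" using x ab r by (smt (verit) zero_less_power2)
  have lin: "((\<lambda>s. s + r^2) has_real_derivative 1) (at x)" by (auto intro!: derivative_eq_intros)
  have "((\<lambda>s. ln (s + r^2)) has_real_derivative 1 / (x + r^2)) (at x)"
    using DERIV_chain2[OF DERIV_ln_divide[OF pos] lin] by simp
  moreover have "(x + r^2) powr (-1) = 1 / (x + r^2)" using pos by (simp add: powr_minus divide_inverse)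
  ultimately show "((\<lambda>s. ln (s + r^2)) has_real_derivative (x + r^2) powr (-1)) (at x)" by simp
qed

definition Bx :: "real \<Rightarrow> real \<Rightarrow> real \<Rightarrow> real \<Rightarrow> real \<Rightarrow> real" where
  "Bx k h p q s = 2 * k * p - 4 * s * max (- q) 0 - 2 * h * sqrt s * p"

definition Kc :: "nat \<Rightarrow> real \<Rightarrow> real" where
  "Kc k a = (if k = 1 then 8 * exp (2 * a) / (1 - a)
             else if k = 2 then 6 * exp (2 * a) / (2 - a)
             else 2 * 2 powr (real k / 2) * exp (2 * a) / ((real k - a) * (real k - 2)))"

lemma prof_Bx:
  assumes h: "h \<ge> 0" and r: "r > 0" and lam: "lam \<ge> 0" and s: "0 \<le> s" and kh: "k - h * sqrt s \<ge> 0"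
  shows "Bx k h (prof_p k h lam r s) (prof_q k h lam r s) s \<ge>
         2 * prof_p k h lam r s * r^2 * (k - h * sqrt s) / (s + r^2)"
  unfolding Bx_def prof_q_def
  using B_bound[OF prof_p_nonneg[OF lam] s h r kh, of k] by simp

lemma prof_p_lower:
  assumes r: "r > 0" and s: "0 \<le> s" "s < r^2" and k: "k > 0" and lam: "lam = (2 * r^2) powr (k / 2) / c" and c: "c > 0"
    and h: "h \<ge> 0"
  shows "prof_p k h lam r s \<ge> 1 / c"
proof -
  have t: "0 < s + r^2" "s + r^2 \<le> 2 * r^2" using s r by (auto simp: add_nonneg_pos)
  have "(2 * r^2) powr (-(k/2)) \<le> (s + r^2) powr (-(k/2))"
    by (rule powr_mono2') (use t k in auto)
  moreover have "(2 * r^2) powr (k / 2) * (2 * r^2) powr (-(k/2)) = 1"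
    using r by (simp add: powr_add[symmetric])
  moreover have "exp (h * sqrt (s + r^2)) \<ge> 1" using h t by simp
  ultimately have "1 \<le> (2 * r^2) powr (k / 2) * ((s + r^2) powr (-(k/2)) * exp (h * sqrt (s + r^2)))"
  proof -
    assume a1: "(2 * r^2) powr (-(k/2)) \<le> (s + r^2) powr (-(k/2))"
      and a2: "(2 * r^2) powr (k / 2) * (2 * r^2) powr (-(k/2)) = 1"
      and a3: "exp (h * sqrt (s + r^2)) \<ge> 1"
    define A where "A = (2 * r^2) powr (k / 2)"
    define X where "X = (s + r^2) powr (-(k/2))"
    define E where "E = exp (h * sqrt (s + r^2))"
    have A0: "A \<ge> 0" "X \<ge> 0" unfolding A_def X_def by simp_all
    have "X \<le> X * E" using a3 A0 unfolding E_def by (simp add: mult_le_cancel_left1)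
    have "1 = A * (2 * r^2) powr (-(k/2))" using a2 unfolding A_def by simp
    also have "\<dots> \<le> A * X" using a1 A0 unfolding X_def by (simp add: mult_left_mono)
    also have "\<dots> \<le> A * (X * E)" using \<open>X \<le> X * E\<close> A0 by (simp add: mult_left_mono)
    finally show ?thesis unfolding A_def X_def E_def .
  qed
  then show ?thesis unfolding prof_p_def lam using c by (simp add: field_simps)
qed

lemma profile_B:
  fixes k :: nat and h R r :: real
  assumes k1: "k \<ge> 1" and h: "h \<ge> 0" and R: "R > 0" and a: "h * R < real k" and r: "r > 0" "r \<le> R"
  defines "lam \<equiv> (2 * r^2) powr (real k / 2) / (real k - h * R)"
  shows "\<And>s. 0 \<le> s \<Longrightarrow> s \<le> R^2 \<Longrightarrow> Bx k h (prof_p k h lam r s) (prof_q k h lam r s) s \<ge> 0"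
    and "\<And>s. 0 \<le> s \<Longrightarrow> s < r^2 \<Longrightarrow> Bx k h (prof_p k h lam r s) (prof_q k h lam r s) s \<ge> 1"
proof -
  have c: "real k - h * R > 0" using a by simp
  have lam0: "lam \<ge> 0" unfolding lam_def using c by simp
  have khs: "k - h * sqrt s \<ge> k - h * R" if "0 \<le> s" "s \<le> R^2" for s
  proof -
    have "sqrt s \<le> sqrt (R^2)" using that by (intro real_sqrt_le_mono) simp
    then have "sqrt s \<le> R" using R by simp
    then show ?thesis using h by (simp add: mult_left_mono)
  qed
  { fix s :: real assume s: "0 \<le> s" and sR: "s \<le> R^2"
    have kh: "k - h * sqrt s \<ge> 0" using khs[OF s sR] c by linarith
    have "0 \<le> 2 * prof_p k h lam r s * r^2 * (k - h * sqrt s) / (s + r^2)"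
      using prof_p_nonneg[OF lam0] kh s r by (simp add: add_nonneg_pos)
    then show "Bx k h (prof_p k h lam r s) (prof_q k h lam r s) s \<ge> 0"
      using prof_Bx[OF h r(1) lam0 s kh] by linarith }
  { fix s :: real assume s: "0 \<le> s" and sr: "s < r^2"
    have "r^2 \<le> R^2" using r by (intro power_mono) auto
    then have sR: "s \<le> R^2" using sr by linarith
    have kh: "k - h * sqrt s \<ge> k - h * R" using khs[OF s sR] .
    have p1: "prof_p k h lam r s \<ge> 1 / (real k - h * R)"
      by (rule prof_p_lower[OF r(1) s sr _ lam_def[THEN meta_eq_to_obj_eq] c h]) (use k1 in simp)
    have t: "0 < s + r^2" "s + r^2 \<le> 2 * r^2" using s sr r by (auto simp: add_nonneg_pos)
    have f1: "2 * prof_p k h lam r s * r^2 * (k - h * sqrt s) / (s + r^2) \<ge>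
          prof_p k h lam r s * (k - h * R)"
    proof -
      define P where "P = prof_p k h lam r s"
      have P0: "P \<ge> 0" unfolding P_def by (rule prof_p_nonneg[OF lam0])
      have "P * (k - h * R) * (s + r^2) \<le> P * (k - h * R) * (2 * r^2)"
        by (rule mult_left_mono) (use t P0 c in auto)
      also have "\<dots> \<le> P * (k - h * sqrt s) * (2 * r^2)"
        by (intro mult_right_mono mult_left_mono kh) (use P0 in auto)
      finally have "P * (k - h * R) \<le> P * (k - h * sqrt s) * (2 * r^2) / (s + r^2)"
        using t by (simp add: field_simps)
      then show ?thesis unfolding P_def[symmetric] by (simp add: mult_ac)
    qed
    have f2: "prof_p k h lam r s * (k - h * R) \<ge> 1"
      using p1 c by (simp add: field_simps)
    show "Bx k h (prof_p k h lam r s) (prof_q k h lam r s) s \<ge> 1"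
    proof -
      have kh0: "real k - h * sqrt s \<ge> 0" using kh c by linarith
      show ?thesis using prof_Bx[OF h r(1) lam0 s kh0] f1 f2 by linarith
    qed }
qed

lemma prof_p_h0: "prof_p k 0 c r = (\<lambda>\<sigma>. c * (\<sigma> + r^2) powr (-(k/2)))"
  by (rule ext) (simp add: prof_p_def)

lemma F_lower_general:
  fixes k :: nat and h R r :: real
  assumes h: "h \<ge> 0" and R: "R > 0" and r: "r > 0" "r \<le> R" and lam: "lam \<ge> 0"
    and s: "0 \<le> s" "s \<le> R^2"
  shows "prof_F k h lam r R s \<le> 0 \<and>
    - (lam * exp (2 * (h * R)) * integral {0..R^2} (\<lambda>\<sigma>. (\<sigma> + r^2) powr (-(real k/2)))) \<le> prof_F k h lam r R s"
proof -
  have eqF: "prof_F k h lam r R s = - integral {s..R^2} (prof_p k h lam r)" by (rule prof_F_eq[OF r(1) s])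
  have il: "0 \<le> integral {s..R^2} (prof_p k h lam r) \<and>
         integral {s..R^2} (prof_p k h lam r) \<le> integral {0..R^2} (prof_p k h lam r)"
    by (rule prof_int_le[OF r(1) lam s])
  have sub: "{0..R^2} \<subseteq> {-(r^2/2)..R^2}" by auto
  have i1: "prof_p k h lam r integrable_on {0..R^2}"
    using integrable_continuous_real[OF continuous_on_subset[OF prof_p_cont[OF r(1)] sub]] .
  have i2: "prof_p k 0 (lam * exp (2 * (h * R))) r integrable_on {0..R^2}"
    using integrable_continuous_real[OF continuous_on_subset[OF prof_p_cont[OF r(1)] sub]] .
  have "integral {0..R^2} (prof_p k h lam r) \<le> integral {0..R^2} (prof_p k 0 (lam * exp (2 * (h * R))) r)"
  proof (rule integral_le[OF i1 i2])
    fix x assume x: "x \<in> {0..R^2}"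
    have "r^2 \<le> R^2" using r by (intro power_mono) auto
    then have "x + r^2 \<le> (2 * R)^2" using x by (simp add: power2_eq_square)
    then have "sqrt (x + r^2) \<le> sqrt ((2*R)^2)" by (rule real_sqrt_le_mono)
    moreover have "sqrt ((2*R)^2) = 2 * R" using R by (simp only: real_sqrt_abs)
    ultimately have "sqrt (x + r^2) \<le> 2 * R" by linarith
    then have "h * sqrt (x + r^2) \<le> h * (2 * R)" using h by (rule mult_left_mono)
    then have "h * sqrt (x + r^2) \<le> 2 * (h * R)" by (simp add: mult_ac)
    then have "exp (h * sqrt (x + r^2)) \<le> exp (2 * (h * R))" by simp
    then have "lam * (x + r^2) powr (-(real k/2)) * exp (h * sqrt (x + r^2)) \<le>
               lam * (x + r^2) powr (-(real k/2)) * exp (2 * (h * R))"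
      by (intro mult_left_mono) (use lam in auto)
    then show "prof_p k h lam r x \<le> prof_p k 0 (lam * exp (2 * (h * R))) r x"
      unfolding prof_p_def by (simp add: mult_ac)
  qed
  also have "\<dots> = lam * exp (2 * (h * R)) * integral {0..R^2} (\<lambda>\<sigma>. (\<sigma> + r^2) powr (-(real k/2)))"
    unfolding prof_p_h0 by (simp add: integral_mult_right)
  finally show ?thesis using eqF il by linarith
qed

lemma sqrt_sq_nonneg: "0 \<le> (x::real) \<Longrightarrow> sqrt (x^2) = x" by simp

lemma I_case1:
  fixes r R :: real
  assumes r: "r > 0" "2 * r \<le> R"
  shows "(2 * r^2) powr (1/2) * integral {0..R^2} (\<lambda>\<sigma>. (\<sigma> + r^2) powr (-(1/2))) \<le> 8 * (R * r)"
proof -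
  have R: "R > 0" using r by simp
  have I: "integral {0..R^2} (\<lambda>\<sigma>. (\<sigma> + r^2) powr (-(1/2))) =
      ((R^2 + r^2) powr (-(1/2) + 1) - (0 + r^2) powr (-(1/2) + 1)) / (-(1/2) + 1)"
    by (rule int_powr_eq[OF r(1)]) auto
  have "(R^2 + r^2) powr (-(1/2) + 1) = sqrt (R^2 + r^2)" by (simp add: powr_half_sqrt)
  moreover have "(0 + r^2) powr (-(1/2) + 1) = r" using r by (simp add: powr_half_sqrt)
  ultimately have I2: "integral {0..R^2} (\<lambda>\<sigma>. (\<sigma> + r^2) powr (-(1/2))) = 2 * (sqrt (R^2 + r^2) - r)"
    using I by simp
  have "r * r \<le> R * R" using r by (intro mult_mono) auto
  moreover have "R * R \<ge> 0" by simp
  moreover have "(2*R)*(2*R) = 4*(R*R)" by simp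
  ultimately have "R^2 + r^2 \<le> (2 * R)^2" unfolding power2_eq_square by linarith
  then have "sqrt (R^2 + r^2) \<le> sqrt ((2 * R)^2)" by (rule real_sqrt_le_mono)
  moreover have "sqrt ((2 * R)^2) = 2 * R" by (rule sqrt_sq_nonneg) (use R in simp)
  ultimately have sq: "sqrt (R^2 + r^2) \<le> 2 * R" by linarith
  have "r \<le> sqrt (R^2 + r^2)" using r by (metis abs_of_pos add_0 add_le_cancel_right real_sqrt_abs real_sqrt_le_mono zero_le_power2)
  then have I0: "0 \<le> 2 * (sqrt (R^2 + r^2) - r)" by simp
  have I3: "2 * (sqrt (R^2 + r^2) - r) \<le> 4 * R" using sq r by simp
  have "(2 * r^2) powr (1/2) = sqrt (2 * r^2)" by (simp add: powr_half_sqrt)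
  also have "\<dots> \<le> sqrt ((2 * r)^2)" by (rule real_sqrt_le_mono) (simp add: power2_eq_square)
  also have "\<dots> = 2 * r" by (rule sqrt_sq_nonneg) (use r in simp)
  finally have A: "(2 * r^2) powr (1/2) \<le> 2 * r" .
  have "(2 * r^2) powr (1/2) * (2 * (sqrt (R^2 + r^2) - r)) \<le> (2 * r) * (4 * R)"
    by (rule mult_mono[OF A I3]) (use r I0 in auto)
  then show ?thesis unfolding I2 by (simp add: mult.commute)
qed

lemma I_case2:
  fixes r R :: real
  assumes r: "r > 0" "2 * r \<le> R"
  shows "(2 * r^2) powr (2/2) * integral {0..R^2} (\<lambda>\<sigma>. (\<sigma> + r^2) powr (-(2/2))) \<le> 6 * (r^2 * \<bar>ln (R / r)\<bar>)"
proof -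
  have R: "R > 0" using r by simp
  have I: "integral {0..R^2} (\<lambda>\<sigma>. (\<sigma> + r^2) powr (-1)) = ln (R^2 + r^2) - ln (0 + r^2)"
    by (rule int_inv_eq[OF r(1)]) auto
  define x where "x = R / r"
  have x2: "x \<ge> 2" unfolding x_def using r by (simp add: field_simps)
  have Rx: "R = x * r" unfolding x_def using r by simp
  have "ln (R^2 + r^2) - ln (r^2) = ln ((R^2 + r^2) / r^2)" using r by (simp add: ln_div)
  also have "(R^2 + r^2) / r^2 = x^2 + 1" unfolding Rx using r by (simp add: field_simps power2_eq_square)
  also have "ln (x^2 + 1) \<le> ln (x^3)"
  proof -
    have "x^3 - x^2 - 1 = x^2 * (x - 1) - 1" by (simp add: power2_eq_square power3_eq_cube algebra_simps)
    moreover have "x^2 * (x - 1) \<ge> 4 * 1"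
    proof (rule mult_mono)
      show "4 \<le> x^2" using mult_mono[of 2 x 2 x] x2 by (simp add: power2_eq_square)
    qed (use x2 in auto)
    ultimately have "x^2 + 1 \<le> x^3" by linarith
    moreover have "x^2 + 1 > 0" by (smt (verit) zero_le_power2)
    moreover have "x^3 > 0" using x2 by simp
    ultimately show ?thesis by (subst ln_le_cancel_iff) auto
  qed
  also have "ln (x^3) = 3 * ln x" using x2 by (simp add: ln_realpow)
  finally have "ln (R^2 + r^2) - ln (r^2) \<le> 3 * ln x" .
  moreover have "ln x \<ge> 0" using x2 by simp
  ultimately have I2: "integral {0..R^2} (\<lambda>\<sigma>. (\<sigma> + r^2) powr (-(2/2))) \<le> 3 * \<bar>ln (R / r)\<bar>"
    using I unfolding x_def by simp
  have A: "(2 * r^2) powr (2/2) = 2 * r^2" using r by simp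
  have "(2 * r^2) * integral {0..R^2} (\<lambda>\<sigma>. (\<sigma> + r^2) powr (-(2/2))) \<le> (2 * r^2) * (3 * \<bar>ln (R / r)\<bar>)"
    by (rule mult_left_mono[OF I2]) simp
  then show ?thesis unfolding A by simp
qed

lemma I_case3:
  fixes k :: nat and r R :: real
  assumes r: "r > 0" "2 * r \<le> R" and k: "k \<ge> 3"
  shows "(2 * r^2) powr (real k/2) * integral {0..R^2} (\<lambda>\<sigma>. (\<sigma> + r^2) powr (-(real k/2)))
     \<le> 2 * 2 powr (real k / 2) / (real k - 2) * r^2"
proof -
  define e where "e = -(real k/2)"
  have e1: "e + 1 < 0" unfolding e_def using k by simp
  have I: "integral {0..R^2} (\<lambda>\<sigma>. (\<sigma> + r^2) powr e) =
      ((R^2 + r^2) powr (e + 1) - (0 + r^2) powr (e + 1)) / (e + 1)"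
    by (rule int_powr_eq[OF r(1)]) (use e1 in auto)
  have "((R^2 + r^2) powr (e + 1) - (r^2) powr (e + 1)) / (e + 1) =
        ((r^2) powr (e + 1) - (R^2 + r^2) powr (e + 1)) / (-(e + 1))"
    by (metis minus_diff_eq minus_divide_divide)
  also have "\<dots> \<le> (r^2) powr (e + 1) / (-(e + 1))"
    using e1 by (intro divide_right_mono) auto
  finally have I2: "integral {0..R^2} (\<lambda>\<sigma>. (\<sigma> + r^2) powr e) \<le> (r^2) powr (e + 1) / (-(e + 1))"
    using I by simp
  have A: "(2 * r^2) powr (real k/2) = 2 powr (real k / 2) * (r^2) powr (real k/2)"
    using r by (simp add: powr_mult)
  have "(2 * r^2) powr (real k/2) * integral {0..R^2} (\<lambda>\<sigma>. (\<sigma> + r^2) powr e) \<le>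
        (2 * r^2) powr (real k/2) * ((r^2) powr (e + 1) / (-(e + 1)))"
    by (rule mult_left_mono[OF I2]) simp
  also have "\<dots> = 2 powr (real k / 2) * ((r^2) powr (real k/2) * (r^2) powr (e + 1)) / (-(e + 1))"
    unfolding A by simp
  also have "(r^2) powr (real k/2) * (r^2) powr (e + 1) = r^2"
    using r unfolding e_def by (simp add: powr_add[symmetric])
  also have "-(e + 1) = (real k - 2) / 2" unfolding e_def by simp
  finally show ?thesis unfolding e_def by (simp add: field_simps)
qed

lemma profile_Fbound:
  fixes k :: nat and h R r s :: real
  assumes k1: "k \<ge> 1" and h: "h \<ge> 0" and R: "R > 0" and a: "h * R < real k" and r: "r > 0" "2 * r \<le> R"
    and s: "0 \<le> s" "s \<le> R^2"
  defines "lam \<equiv> (2 * r^2) powr (real k / 2) / (real k - h * R)"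
  shows "prof_F k h lam r R s \<le> 0 \<and> -(Kc k (h*R) * Psi_gauge k R r) \<le> prof_F k h lam r R s"
proof -
  have c: "real k - h * R > 0" using a by simp
  have lam0: "lam \<ge> 0" unfolding lam_def using c by simp
  have rR: "r \<le> R" using r by simp
  define E where "E = exp (2 * (h * R))"
  define I where "I = integral {0..R^2} (\<lambda>\<sigma>. (\<sigma> + r^2) powr (-(real k/2)))"
  define A where "A = (2 * r^2) powr (real k / 2)"
  have gen: "prof_F k h lam r R s \<le> 0 \<and> - (lam * E * I) \<le> prof_F k h lam r R s"
    unfolding E_def I_def by (rule F_lower_general[OF h R r(1) rR lam0 s])
  have eq: "lam * E * I = E / (real k - h * R) * (A * I)" unfolding lam_def A_def by simp
  have Ec: "E / (real k - h * R) \<ge> 0" unfolding E_def using c by simp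
  have X: "A * I \<le> X \<Longrightarrow> E / (real k - h * R) * X = Kc k (h*R) * Psi_gauge k R r \<Longrightarrow>
           lam * E * I \<le> Kc k (h*R) * Psi_gauge k R r" for X
    unfolding eq using Ec by (metis mult_left_mono)
  have "lam * E * I \<le> Kc k (h*R) * Psi_gauge k R r"
  proof (cases "k = 1")
    case True
    show ?thesis
    proof (rule X)
      show "A * I \<le> 8 * (R * r)" unfolding A_def I_def using I_case1[OF r] True by simp
      show "E / (real k - h * R) * (8 * (R * r)) = Kc k (h*R) * Psi_gauge k R r"
        unfolding E_def Kc_def Psi_gauge_def using True by simp
    qed
  next
    case False
    show ?thesis
    proof (cases "k = 2")
      case True
      show ?thesis
      proof (rule X)
        show "A * I \<le> 6 * (r^2 * \<bar>ln (R / r)\<bar>)" unfolding A_def I_def using I_case2[OF r] True by simp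
        show "E / (real k - h * R) * (6 * (r^2 * \<bar>ln (R / r)\<bar>)) = Kc k (h*R) * Psi_gauge k R r"
          unfolding E_def Kc_def Psi_gauge_def using True r by simp
      qed
    next
      case False2: False
      have k3: "k \<ge> 3" using k1 False False2 by linarith
      show ?thesis
      proof (rule X)
        show "A * I \<le> 2 * 2 powr (real k / 2) / (real k - 2) * r^2"
          unfolding A_def I_def by (rule I_case3[OF r k3])
        show "E / (real k - h * R) * (2 * 2 powr (real k / 2) / (real k - 2) * r^2) = Kc k (h*R) * Psi_gauge k R r"
          unfolding E_def Kc_def Psi_gauge_def using False False2 by simp
      qed
    qed
  qed
  then show ?thesis using gen by linarith
qed

lemma sq_deriv:
  fixes c y :: "real^'n"
  shows "((\<lambda>y. (y - c) \<bullet> (y - c)) has_derivative (\<lambda>v. 2 * ((y - c) \<bullet> v))) (at y)"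
proof -
  have "((\<lambda>y. (y - c) \<bullet> (y - c)) has_derivative (\<lambda>v. (y - c) \<bullet> v + v \<bullet> (y - c))) (at y)"
    by (auto intro!: derivative_eq_intros)
  moreover have "(\<lambda>v. (y - c) \<bullet> v + v \<bullet> (y - c)) = (\<lambda>v. 2 * ((y - c) \<bullet> v))"
    by (auto simp: inner_commute)
  ultimately show ?thesis by simp
qed

lemma w_deriv:
  fixes c :: "'j \<Rightarrow> real^'n"
  assumes fJ: "finite J"
    and dF: "\<And>j s. j \<in> J \<Longrightarrow> s \<ge> 0 \<Longrightarrow> (F j has_real_derivative F1 j s) (at s)"
  shows "((\<lambda>x. e0 + (\<Sum>j\<in>J. F j ((x - c j) \<bullet> (x - c j)))) has_derivative
          (\<lambda>v. (\<Sum>j\<in>J. (2 * F1 j ((y - c j) \<bullet> (y - c j))) *\<^sub>R (y - c j)) \<bullet> v)) (at y)"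
proof -
  have each: "((\<lambda>x. F j ((x - c j) \<bullet> (x - c j))) has_derivative
        (\<lambda>v. F1 j ((y - c j) \<bullet> (y - c j)) * (2 * ((y - c j) \<bullet> v)))) (at y)" if j: "j \<in> J" for j
  proof -
    have "(F j has_derivative (\<lambda>u. F1 j ((y - c j) \<bullet> (y - c j)) * u)) (at ((y - c j) \<bullet> (y - c j)))"
      using dF[OF j, of "(y - c j) \<bullet> (y - c j)"] by (simp add: has_field_derivative_def)
    from has_derivative_compose[OF sq_deriv this] show ?thesis .
  qed
  have "((\<lambda>x. e0 + (\<Sum>j\<in>J. F j ((x - c j) \<bullet> (x - c j)))) has_derivative
        (\<lambda>v. 0 + (\<Sum>j\<in>J. F1 j ((y - c j) \<bullet> (y - c j)) * (2 * ((y - c j) \<bullet> v))))) (at y)"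
    by (intro has_derivative_add has_derivative_const has_derivative_sum each)
  moreover have "(\<lambda>v. 0 + (\<Sum>j\<in>J. F1 j ((y - c j) \<bullet> (y - c j)) * (2 * ((y - c j) \<bullet> v)))) =
     (\<lambda>v. (\<Sum>j\<in>J. (2 * F1 j ((y - c j) \<bullet> (y - c j))) *\<^sub>R (y - c j)) \<bullet> v)"
    by (auto simp: inner_sum_left mult_ac)
  ultimately show ?thesis by simp
qed

lemma G_line_deriv:
  fixes c :: "'j \<Rightarrow> real^'n"
  assumes fJ: "finite J"
    and dF1: "\<And>j s. j \<in> J \<Longrightarrow> s \<ge> 0 \<Longrightarrow> (F1 j has_real_derivative F2 j s) (at s)"
  shows "((\<lambda>t. (\<Sum>j\<in>J. (2 * F1 j ((x0 + t *\<^sub>R v - c j) \<bullet> (x0 + t *\<^sub>R v - c j))) *\<^sub>R (x0 + t *\<^sub>R v - c j)) \<bullet> v)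
     has_real_derivative
     (\<Sum>j\<in>J. 4 * F2 j ((x0 - c j) \<bullet> (x0 - c j)) * ((x0 - c j) \<bullet> v)^2 + 2 * F1 j ((x0 - c j) \<bullet> (x0 - c j)) * (v \<bullet> v))) (at 0)"
proof -
  have each: "((\<lambda>t. 2 * F1 j ((x0 + t *\<^sub>R v - c j) \<bullet> (x0 + t *\<^sub>R v - c j)) * ((x0 + t *\<^sub>R v - c j) \<bullet> v))
     has_real_derivative
     4 * F2 j ((x0 - c j) \<bullet> (x0 - c j)) * ((x0 - c j) \<bullet> v)^2 + 2 * F1 j ((x0 - c j) \<bullet> (x0 - c j)) * (v \<bullet> v)) (at 0)"
    if j: "j \<in> J" for j
  proof -
    define z where "z = x0 - c j"
    have sqe: "(x0 + t *\<^sub>R v - c j) \<bullet> (x0 + t *\<^sub>R v - c j) = z \<bullet> z + 2 * t * (z \<bullet> v) + t^2 * (v \<bullet> v)" for t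
      unfolding z_def by (simp add: algebra_simps inner_add_left inner_add_right inner_diff_left inner_diff_right
          inner_commute power2_eq_square)
    have lin: "(x0 + t *\<^sub>R v - c j) \<bullet> v = z \<bullet> v + t * (v \<bullet> v)" for t
      unfolding z_def by (simp add: algebra_simps inner_add_left inner_diff_left)
    have q: "((\<lambda>t. z \<bullet> z + 2 * t * (z \<bullet> v) + t^2 * (v \<bullet> v)) has_real_derivative 2 * (z \<bullet> v)) (at 0)"
      by (auto intro!: derivative_eq_intros)
    have zz: "z \<bullet> z \<ge> 0" by simp
    have f: "((\<lambda>t. F1 j (z \<bullet> z + 2 * t * (z \<bullet> v) + t^2 * (v \<bullet> v))) has_real_derivative
             F2 j (z \<bullet> z) * (2 * (z \<bullet> v))) (at 0)"
      using DERIV_chain2[OF _ q, of "F1 j" "F2 j (z \<bullet> z)"] dF1[OF j zz] by simp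
    have g: "((\<lambda>t. z \<bullet> v + t * (v \<bullet> v)) has_real_derivative v \<bullet> v) (at 0)"
      by (auto intro!: derivative_eq_intros)
    have "((\<lambda>t. 2 * F1 j (z \<bullet> z + 2 * t * (z \<bullet> v) + t^2 * (v \<bullet> v)) * (z \<bullet> v + t * (v \<bullet> v)))
       has_real_derivative 2 * (F2 j (z \<bullet> z) * (2 * (z \<bullet> v))) * (z \<bullet> v + 0 * (v \<bullet> v))
         + (v \<bullet> v) * (2 * F1 j (z \<bullet> z + 2 * 0 * (z \<bullet> v) + 0^2 * (v \<bullet> v)))) (at 0)"
      by (rule DERIV_mult[OF DERIV_cmult[OF f] g])
    then show ?thesis unfolding sqe lin z_def[symmetric]
      by (simp add: power2_eq_square mult_ac)
  qed
  have "((\<lambda>t. \<Sum>j\<in>J. 2 * F1 j ((x0 + t *\<^sub>R v - c j) \<bullet> (x0 + t *\<^sub>R v - c j)) * ((x0 + t *\<^sub>R v - c j) \<bullet> v))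
     has_real_derivative
     (\<Sum>j\<in>J. 4 * F2 j ((x0 - c j) \<bullet> (x0 - c j)) * ((x0 - c j) \<bullet> v)^2 + 2 * F1 j ((x0 - c j) \<bullet> (x0 - c j)) * (v \<bullet> v))) (at 0)"
    by (rule DERIV_sum) (rule each)
  then show ?thesis by (simp add: inner_sum_left)
qed

lemma visc_bound:
  fixes phi w :: "real^'n \<Rightarrow> real" and c :: "'j \<Rightarrow> real^'n"
  assumes \<Omega>: "open \<Omega>" "x0 \<in> \<Omega>" and C2: "C2_near phi x0 Dphi Hphi"
    and tmax: "\<exists>r>0. \<forall>y\<in>\<Omega> \<inter> ball x0 r. w y - phi y \<le> w x0 - phi x0"
    and wdef: "\<And>x. w x = base + (\<Sum>j\<in>J. F j ((x - c j) \<bullet> (x - c j)))"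
    and fJ: "finite J"
    and dF: "\<And>j s. j \<in> J \<Longrightarrow> s \<ge> 0 \<Longrightarrow> (F j has_real_derivative F1 j s) (at s)"
    and dF1: "\<And>j s. j \<in> J \<Longrightarrow> s \<ge> 0 \<Longrightarrow> (F1 j has_real_derivative F2 j s) (at s)"
    and F1pos: "\<And>j s. j \<in> J \<Longrightarrow> s \<ge> 0 \<Longrightarrow> F1 j s \<ge> 0"
    and kn: "k \<le> CARD('n)" and h: "h \<ge> 0"
  shows "Pk_minus k (Hphi x0) - h * norm (Dphi x0) \<ge>
     (\<Sum>j\<in>J. Bx (real k) h (F1 j ((x0 - c j) \<bullet> (x0 - c j))) (F2 j ((x0 - c j) \<bullet> (x0 - c j))) ((x0 - c j) \<bullet> (x0 - c j)))"
proof -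
  define sq where "sq = (\<lambda>j y. (y - c j) \<bullet> (y - c j))"
  define G where "G = (\<lambda>y. (\<Sum>j\<in>J. (2 * F1 j ((y - c j) \<bullet> (y - c j))) *\<^sub>R (y - c j)))"
  define q where "q = (\<lambda>v. \<Sum>j\<in>J. 4 * F2 j ((x0 - c j) \<bullet> (x0 - c j)) * ((x0 - c j) \<bullet> v)^2 + 2 * F1 j ((x0 - c j) \<bullet> (x0 - c j)) * (v \<bullet> v))"
  have wE: "w = (\<lambda>x. base + (\<Sum>j\<in>J. F j ((x - c j) \<bullet> (x - c j))))" using wdef by (rule ext)
  have wder: "(w has_derivative (\<lambda>v. G y \<bullet> v)) (at y)" for y
    unfolding wE G_def by (rule w_deriv[OF fJ dF])
  have w2: "((\<lambda>t. G (x0 + t *\<^sub>R v) \<bullet> v) has_real_derivative q v) (at 0)" for v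
    unfolding G_def q_def by (rule G_line_deriv[OF fJ dF1])
  have T: "Dphi x0 = G x0 \<and> (\<forall>v. q v \<le> v \<bullet> (Hphi x0 *v v))"
    by (rule touch[OF \<Omega> C2 tmax, of 1 G q]) (use wder w2 in auto)
  have sym: "transpose (Hphi x0) = Hphi x0" by (rule schwarz[OF C2])
  define s where "s = (\<lambda>j. (x0 - c j) \<bullet> (x0 - c j))"
  have s0: "s j \<ge> 0" for j unfolding s_def by simp
  have sE: "(x0 - c j) \<bullet> (x0 - c j) = s j" for j unfolding s_def by simp
  define a where "a = (\<Sum>j\<in>J. 2 * F1 j (s j))"
  define b where "b = (\<lambda>j. 4 * max (- F2 j (s j)) 0)"
  have quad: "v \<bullet> (Hphi x0 *v v) \<ge> a * (v \<bullet> v) - (\<Sum>j\<in>J. b j * ((x0 - c j) \<bullet> v)^2)" for v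
  proof -
    have "a * (v \<bullet> v) - (\<Sum>j\<in>J. b j * ((x0 - c j) \<bullet> v)^2) =
          (\<Sum>j\<in>J. 2 * F1 j (s j) * (v \<bullet> v) - b j * ((x0 - c j) \<bullet> v)^2)"
      unfolding a_def by (simp add: sum_distrib_right sum_subtractf)
    also have "\<dots> \<le> q v" unfolding q_def sE
    proof (rule sum_mono)
      fix j assume "j \<in> J"
      have "- (4 * max (- F2 j (s j)) 0) * ((x0 - c j) \<bullet> v)^2 \<le> 4 * F2 j (s j) * ((x0 - c j) \<bullet> v)^2"
        by (rule mult_right_mono) auto
      then show "2 * F1 j (s j) * (v \<bullet> v) - b j * ((x0 - c j) \<bullet> v)^2 \<le>
          4 * F2 j (s j) * ((x0 - c j) \<bullet> v)^2 + 2 * F1 j (s j) * (v \<bullet> v)"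
        unfolding b_def by linarith
    qed
    also have "\<dots> \<le> v \<bullet> (Hphi x0 *v v)" using T by blast
    finally show ?thesis .
  qed
  have bpos: "b j \<ge> 0" for j unfolding b_def by simp
  have P: "Pk_minus k (Hphi x0) \<ge> real k * a - (\<Sum>j\<in>J. b j * ((x0 - c j) \<bullet> (x0 - c j)))"
    by (rule kyfan[OF sym kn fJ _ quad]) (use bpos in auto)
  have N: "norm (Dphi x0) \<le> (\<Sum>j\<in>J. 2 * F1 j (s j) * sqrt (s j))"
  proof -
    have "norm (Dphi x0) = norm (\<Sum>j\<in>J. (2 * F1 j (s j)) *\<^sub>R (x0 - c j))"
      using T unfolding G_def s_def by simp
    also have "\<dots> \<le> (\<Sum>j\<in>J. norm ((2 * F1 j (s j)) *\<^sub>R (x0 - c j)))" by (rule norm_sum)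
    also have "\<dots> = (\<Sum>j\<in>J. 2 * F1 j (s j) * sqrt (s j))"
    proof (rule sum.cong[OF refl])
      fix j assume j: "j \<in> J"
      have "F1 j (s j) \<ge> 0" using F1pos[OF j s0] .
      then show "norm ((2 * F1 j (s j)) *\<^sub>R (x0 - c j)) = 2 * F1 j (s j) * sqrt (s j)"
        unfolding s_def norm_scaleR by (simp add: norm_eq_sqrt_inner[of "x0 - c j"])
    qed
    finally show ?thesis .
  qed
  have "h * norm (Dphi x0) \<le> h * (\<Sum>j\<in>J. 2 * F1 j (s j) * sqrt (s j))"
    by (rule mult_left_mono[OF N h])
  moreover have "(\<Sum>j\<in>J. Bx (real k) h (F1 j (s j)) (F2 j (s j)) (s j)) =
      real k * a - (\<Sum>j\<in>J. b j * ((x0 - c j) \<bullet> (x0 - c j))) - h * (\<Sum>j\<in>J. 2 * F1 j (s j) * sqrt (s j))"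
    unfolding Bx_def a_def b_def s_def
    by (simp add: sum_subtractf sum_distrib_left sum_distrib_right mult_ac)
  ultimately show ?thesis using P unfolding s_def by linarith
qed

lemma usc_of_cont:
  assumes "\<And>x. isCont w x"
  shows "usc_on S w"
  unfolding usc_on_def
proof (intro ballI allI impI)
  fix x a assume "x \<in> S" "w x < a"
  then have "a - w x > 0" by simp
  then obtain d where d: "d > 0" "\<And>y. dist y x < d \<Longrightarrow> dist (w y) (w x) < a - w x"
    using assms[of x] unfolding continuous_at_eps_delta by blast
  show "\<exists>e>0. \<forall>y\<in>S. dist y x < e \<longrightarrow> w y < a"
  proof (intro exI[of _ d] conjI ballI impI)
    fix y assume "y \<in> S" "dist y x < d"
    then have "dist (w y) (w x) < a - w x" using d by blast
    then show "w y < a" by (simp add: dist_real_def abs_less_iff)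
  qed (use d in simp)
qed

lemma Kc_pos:
  fixes k :: nat
  assumes "k \<ge> 1" "a < real k" "0 \<le> a"
  shows "Kc k a > 0"
proof -
  consider "k = 1" | "k = 2" | "k \<ge> 3" using assms by linarith
  then show ?thesis
  proof cases
    case 1 then show ?thesis using assms unfolding Kc_def by simp
  next
    case 2 then show ?thesis using assms unfolding Kc_def by simp
  next
    case 3
    then have "(real k - a) * (real k - 2) > 0" using assms by simp
    then show ?thesis using 3 unfolding Kc_def by simp
  qed
qed

lemma Psi_nonneg: "0 \<le> r \<Longrightarrow> 0 < R \<Longrightarrow> Psi_gauge k R r \<ge> 0"
  unfolding Psi_gauge_def by auto

lemma core:
  fixes E :: "(real^'n) set" and x :: "nat \<Rightarrow> real^'n" and r :: "nat \<Rightarrow> real" and k :: nat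
  assumes k1: "1 \<le> k" and kn: "k \<le> CARD('n)" and h: "h \<ge> 0" and R: "R > 0" and a: "h * R < real k"
    and bE: "bounded E"
    and fJ: "finite J" and rpos: "\<And>j. j \<in> J \<Longrightarrow> 0 < r j"
    and rsmall: "\<And>j. j \<in> J \<Longrightarrow> 4 * r j \<le> R - diameter E"
    and meet: "\<And>j. j \<in> J \<Longrightarrow> \<exists>e\<in>E. dist e (x j) < r j"
    and cover: "E \<subseteq> (\<Union>j\<in>J. ball (x j) (r j))"
    and eps: "\<epsilon> > 0"
  shows "mu_bar k h E \<ge> ereal (1 / (\<epsilon> + Kc k (h*R) * (\<Sum>j\<in>J. Psi_gauge k R (r j))))"
proof -
  define lamf where "lamf = (\<lambda>j. (2 * (r j)^2) powr (real k / 2) / (real k - h * R))"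
  define F where "F = (\<lambda>j. prof_F k h (lamf j) (r j) R)"
  define F1 where "F1 = (\<lambda>j. prof_p k h (lamf j) (r j))"
  define F2 where "F2 = (\<lambda>j. prof_q k h (lamf j) (r j))"
  define w where "w = (\<lambda>y. -\<epsilon> + (\<Sum>j\<in>J. F j ((y - x j) \<bullet> (y - x j))))"
  define \<Omega> where "\<Omega> = (\<Union>j\<in>J. ball (x j) (r j))"
  define S where "S = (\<Sum>j\<in>J. Psi_gauge k R (r j))"
  define K where "K = Kc k (h*R)"
  have c: "real k - h * R > 0" using a by simp
  have K0: "K > 0" unfolding K_def by (rule Kc_pos) (use k1 a h R in auto)
  have S0: "S \<ge> 0" unfolding S_def by (intro sum_nonneg Psi_nonneg) (use rpos R in \<open>auto intro: less_imp_le\<close>)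
  define cc where "cc = 1 / (\<epsilon> + K * S)"
  have den: "\<epsilon> + K * S > 0" using eps K0 S0 by (simp add: add_pos_nonneg)
  have cc0: "cc > 0" unfolding cc_def using den by simp
  have dE: "diameter E \<ge> 0" by (rule diameter_ge_0[OF bE])
  have rR2: "2 * r j \<le> R" if "j \<in> J" for j using rsmall[OF that] rpos[OF that] dE by linarith
  have lam0: "lamf j \<ge> 0" for j unfolding lamf_def using c by simp
  have distR: "dist y (x j) \<le> R" if y: "y \<in> ball (x i) (r i)" and i: "i \<in> J" and j: "j \<in> J" for y i j
  proof -
    obtain ei where ei: "ei \<in> E" "dist ei (x i) < r i" using meet[OF i] by blast
    obtain ej where ej: "ej \<in> E" "dist ej (x j) < r j" using meet[OF j] by blast
    have t1: "dist y (x j) \<le> dist y (x i) + dist (x i) (x j)" by (rule dist_triangle)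
    have t2: "dist (x i) (x j) \<le> dist (x i) ei + dist ei (x j)" by (rule dist_triangle)
    have t3: "dist ei (x j) \<le> dist ei ej + dist ej (x j)" by (rule dist_triangle)
    have "dist y (x j) \<le> dist y (x i) + dist (x i) ei + dist ei ej + dist ej (x j)"
      using t1 t2 t3 by linarith
    also have "\<dots> \<le> r i + r i + diameter E + r j"
    proof -
      have "dist y (x i) < r i" using y by (simp add: dist_commute)
      moreover have "dist (x i) ei < r i" using ei by (simp add: dist_commute)
      moreover have "dist ei ej \<le> diameter E" by (rule diameter_bounded_bound[OF bE ei(1) ej(1)])
      ultimately show ?thesis using ej by linarith
    qed
    also have "\<dots> \<le> R" using rsmall[OF i] rsmall[OF j] rpos[OF i] rpos[OF j] by linarith
    finally show ?thesis .
  qed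
  have sqdist: "(y - x j) \<bullet> (y - x j) = (dist y (x j))^2" for y j
    by (simp add: dist_norm power2_norm_eq_inner)
  have sR: "(y - x j) \<bullet> (y - x j) \<le> R^2" if "dist y (x j) \<le> R" for y j
    unfolding sqdist using that by (intro power_mono) auto
  have Fb: "F j s \<le> 0 \<and> -(K * Psi_gauge k R (r j)) \<le> F j s" if "j \<in> J" "0 \<le> s" "s \<le> R^2" for j s
    unfolding F_def lamf_def K_def
    by (rule profile_Fbound[OF k1 h R a rpos[OF that(1)] rR2[OF that(1)] that(2,3)])
  have Bb0: "Bx k h (F1 j s) (F2 j s) s \<ge> 0" if "j \<in> J" "0 \<le> s" "s \<le> R^2" for j s
    unfolding F1_def F2_def lamf_def
    by (rule profile_B(1)[OF k1 h R a rpos[OF that(1)] _ that(2,3)]) (use rR2[OF that(1)] rpos[OF that(1)] in linarith)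
  have Bb1: "Bx k h (F1 j s) (F2 j s) s \<ge> 1" if "j \<in> J" "0 \<le> s" "s < (r j)^2" for j s
    unfolding F1_def F2_def lamf_def
    by (rule profile_B(2)[OF k1 h R a rpos[OF that(1)] _ that(2,3)]) (use rR2[OF that(1)] rpos[OF that(1)] in linarith)
  have dF: "(F j has_real_derivative F1 j s) (at s)" if "j \<in> J" "s \<ge> 0" for j s
  proof -
    have "(r j)^2 > 0" using rpos[OF that(1)] by simp
    then have "s > -((r j)^2/2)" using that(2) by linarith
    then show ?thesis unfolding F_def F1_def by (rule prof_F_deriv[OF rpos[OF that(1)]])
  qed
  have dF1: "(F1 j has_real_derivative F2 j s) (at s)" if "j \<in> J" "s \<ge> 0" for j s
  proof -
    have "(r j)^2 > 0" using rpos[OF that(1)] by simp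
    then have "s + (r j)^2 > 0" using that(2) by linarith
    then show ?thesis unfolding F1_def F2_def by (rule prof_p_deriv)
  qed
  have F1pos: "F1 j s \<ge> 0" for j s unfolding F1_def by (rule prof_p_nonneg[OF lam0])
  have wder: "(w has_derivative (\<lambda>v. (\<Sum>j\<in>J. (2 * F1 j ((y - x j) \<bullet> (y - x j))) *\<^sub>R (y - x j)) \<bullet> v)) (at y)" for y
    unfolding w_def by (rule w_deriv[OF fJ dF])
  have wc: "isCont w y" for y using has_derivative_continuous[OF wder] .
  define T where "T = (\<Inter>j\<in>J. cball (x j) R)"
  have OT: "\<Omega> \<subseteq> T" unfolding \<Omega>_def T_def using distR by (auto simp: dist_commute)
  have "closed T" unfolding T_def by (intro closed_INT) auto
  then have clT: "closure \<Omega> \<subseteq> T" using OT by (rule closure_minimal[rotated])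
  have wneg: "w y < 0" if "y \<in> closure \<Omega>" for y
  proof -
    have yT: "dist y (x j) \<le> R" if "j \<in> J" for j using clT \<open>y \<in> closure \<Omega>\<close> that unfolding T_def
      by (auto simp: dist_commute)
    have "(\<Sum>j\<in>J. F j ((y - x j) \<bullet> (y - x j))) \<le> 0"
      by (rule sum_nonpos) (use Fb sR yT in auto)
    then show ?thesis unfolding w_def using eps by linarith
  qed
  have wlow: "w y \<ge> -(\<epsilon> + K * S)" if yO: "y \<in> \<Omega>" for y
  proof -
    obtain i where i: "i \<in> J" "y \<in> ball (x i) (r i)" using yO unfolding \<Omega>_def by blast
    have "(\<Sum>j\<in>J. -(K * Psi_gauge k R (r j))) \<le> (\<Sum>j\<in>J. F j ((y - x j) \<bullet> (y - x j)))"
      by (rule sum_mono) (use Fb sR distR[OF i(2) i(1)] in auto)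
    moreover have "(\<Sum>j\<in>J. -(K * Psi_gauge k R (r j))) = - (K * S)"
      unfolding S_def by (simp add: sum_negf sum_distrib_left)
    ultimately show ?thesis unfolding w_def by linarith
  qed
  have visc: "visc_sub k h cc \<Omega> w"
    unfolding visc_sub_def
  proof (intro ballI allI impI)
    fix x0 phi Dphi Hphi
    assume x0: "x0 \<in> \<Omega>" and C2: "C2_near phi x0 Dphi Hphi"
      and tm: "\<exists>r>0. \<forall>y\<in>\<Omega> \<inter> ball x0 r. w y - phi y \<le> w x0 - phi x0"
    have oO: "open \<Omega>" unfolding \<Omega>_def by auto
    have vb: "Pk_minus k (Hphi x0) - h * norm (Dphi x0) \<ge>
      (\<Sum>j\<in>J. Bx (real k) h (F1 j ((x0 - x j) \<bullet> (x0 - x j))) (F2 j ((x0 - x j) \<bullet> (x0 - x j))) ((x0 - x j) \<bullet> (x0 - x j)))"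
      by (rule visc_bound[OF oO x0 C2 tm _ fJ dF dF1 F1pos kn h]) (simp add: w_def)
    obtain i where i: "i \<in> J" "x0 \<in> ball (x i) (r i)" using x0 unfolding \<Omega>_def by blast
    have "(\<Sum>j\<in>J. Bx (real k) h (F1 j ((x0 - x j) \<bullet> (x0 - x j))) (F2 j ((x0 - x j) \<bullet> (x0 - x j))) ((x0 - x j) \<bullet> (x0 - x j))) \<ge> 1"
    proof -
      let ?B = "\<lambda>j. Bx (real k) h (F1 j ((x0 - x j) \<bullet> (x0 - x j))) (F2 j ((x0 - x j) \<bullet> (x0 - x j))) ((x0 - x j) \<bullet> (x0 - x j))"
      have "?B i \<ge> 1"
      proof (rule Bb1[OF i(1)])
        show "0 \<le> (x0 - x i) \<bullet> (x0 - x i)" by simp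
        have "dist x0 (x i) < r i" using i(2) by (simp add: dist_commute)
        then show "(x0 - x i) \<bullet> (x0 - x i) < (r i)^2" unfolding sqdist
          by (intro power_strict_mono) auto
      qed
      moreover have "(\<Sum>j\<in>J. ?B j) = ?B i + (\<Sum>j\<in>J - {i}. ?B j)"
        using fJ i(1) by (simp add: sum.remove)
      moreover have "(\<Sum>j\<in>J - {i}. ?B j) \<ge> 0"
        by (rule sum_nonneg) (use Bb0 sR distR[OF i(2) i(1)] in auto)
      ultimately show ?thesis by linarith
    qed
    moreover have "cc * w x0 \<ge> -1"
    proof -
      have "cc * w x0 \<ge> cc * (-(\<epsilon> + K * S))" using wlow[OF x0] cc0 by (simp add: mult_left_mono)
      also have "cc * (-(\<epsilon> + K * S)) = -1" unfolding cc_def using den by (simp add: divide_simps)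
      finally show ?thesis .
    qed
    ultimately show "Pk_minus k (Hphi x0) - h * norm (Dphi x0) + cc * w x0 \<ge> 0" using vb by linarith
  qed
  have mo: "mu_bar_open k h \<Omega> \<ge> ereal cc"
    unfolding mu_bar_open_def
  proof (rule Sup_upper, intro CollectI exI conjI)
    show "ereal cc = ereal cc" ..
    show "usc_on (closure \<Omega>) w" by (rule usc_of_cont[OF wc])
    show "\<forall>y\<in>closure \<Omega>. w y < 0" using wneg by blast
    show "visc_sub k h cc \<Omega> w" by (rule visc)
  qed
  have "mu_bar_open k h \<Omega> \<le> mu_bar k h E"
    unfolding mu_bar_def by (rule Sup_upper) (use cover in \<open>auto simp: \<Omega>_def\<close>)
  then show ?thesis using mo unfolding cc_def K_def S_def by simp
qed

lemma mu_bar_nonneg: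
  fixes E :: "(real^'n) set"
  assumes kn: "k \<le> CARD('n)" and h: "h \<ge> 0"
  shows "mu_bar k h E \<ge> 0"
proof -
  define w :: "real^'n \<Rightarrow> real" where "w = (\<lambda>_. -1)"
  have visc: "visc_sub k h 0 UNIV w"
    unfolding visc_sub_def
  proof (intro ballI allI impI)
    fix x0 :: "real^'n" and phi Dphi Hphi
    assume x0: "x0 \<in> UNIV" and C2: "C2_near phi x0 Dphi Hphi"
      and tm: "\<exists>r>0. \<forall>y\<in>UNIV \<inter> ball x0 r. w y - phi y \<le> w x0 - phi x0"
    have "Pk_minus k (Hphi x0) - h * norm (Dphi x0) \<ge>
      (\<Sum>j\<in>({}::nat set). Bx (real k) h ((\<lambda>_ _. 0) j ((x0 - (\<lambda>_. 0) j) \<bullet> (x0 - (\<lambda>_. 0) j)))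
         ((\<lambda>_ _. 0) j ((x0 - (\<lambda>_. 0) j) \<bullet> (x0 - (\<lambda>_. 0) j))) ((x0 - (\<lambda>_. 0) j) \<bullet> (x0 - (\<lambda>_. 0) j)))"
      by (rule visc_bound[OF open_UNIV x0 C2 tm, where base = "-1" and J = "{}"]) (auto simp: w_def kn h)
    then show "Pk_minus k (Hphi x0) - h * norm (Dphi x0) + 0 * w x0 \<ge> 0" by simp
  qed
  have u: "usc_on (closure (UNIV::(real^'n) set)) w" by (rule usc_of_cont) (simp add: w_def)
  have n: "\<forall>y\<in>closure (UNIV::(real^'n) set). w y < 0" by (simp add: w_def)
  have mo: "mu_bar_open k h (UNIV::(real^'n) set) \<ge> ereal 0"
    unfolding mu_bar_open_def by (rule Sup_upper) (use u n visc in blast)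
  have "mu_bar_open k h (UNIV::(real^'n) set) \<le> mu_bar k h E"
    unfolding mu_bar_def by (rule Sup_upper) (use open_UNIV in blast)
  then show ?thesis using mo by (simp add: zero_ereal_def)
qed

lemma cover_bound:
  fixes E :: "(real^'n) set" and k :: nat
  assumes k1: "1 \<le> k" and kn: "k \<le> CARD('n)" and h: "h \<ge> 0" and R: "R > 0" and a: "h * R < real k"
    and cE: "compact E" and dE: "diameter E < R" and t: "t > 0"
    and less: "gen_hausdorff (Psi_gauge k R) E < ennreal t"
  shows "mu_bar k h E \<ge> ereal (1 / (Kc k (h*R) * t))"
proof -
  define K where "K = Kc k (h*R)"
  have K0: "K > 0" unfolding K_def by (rule Kc_pos) (use k1 a h R in auto)
  define \<delta> where "\<delta> = (R - diameter E) / 4"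
  have \<delta>: "\<delta> > 0" unfolding \<delta>_def using dE by simp
  define Cov where "Cov = {(x :: nat \<Rightarrow> real^'n, r :: nat \<Rightarrow> real).
        E \<subseteq> (\<Union>j. ball (x j) (r j)) \<and> (\<forall>j. 0 \<le> r j \<and> r j \<le> \<delta>)}"
  have "(INF (x, r)\<in>Cov. (\<Sum>j. ennreal (Psi_gauge k R (r j)))) \<le> gen_hausdorff (Psi_gauge k R) E"
    unfolding gen_hausdorff_def Cov_def by (rule SUP_upper) (use \<delta> in simp)
  then have "(INF (x, r)\<in>Cov. (\<Sum>j. ennreal (Psi_gauge k R (r j)))) < ennreal t" using less by simp
  then obtain xs rs where xr: "(xs, rs) \<in> Cov" and sl: "(\<Sum>j. ennreal (Psi_gauge k R (rs j))) < ennreal t"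
    unfolding INF_less_iff by auto
  have covE: "E \<subseteq> (\<Union>j. ball (xs j) (rs j))" and rsb: "\<And>j. 0 \<le> rs j \<and> rs j \<le> \<delta>"
    using xr unfolding Cov_def by auto
  have op: "\<forall>c\<in>range (\<lambda>j. ball (xs j) (rs j)). open c" by auto
  have cv: "E \<subseteq> \<Union> (range (\<lambda>j. ball (xs j) (rs j)))" using covE by auto
  have "\<exists>D\<subseteq>range (\<lambda>j. ball (xs j) (rs j)). finite D \<and> E \<subseteq> \<Union> D"
    using cE[unfolded compact_eq_Heine_Borel, rule_format, OF conjI[OF op cv]] .
  then obtain D where D: "D \<subseteq> range (\<lambda>j. ball (xs j) (rs j))" "finite D" "E \<subseteq> \<Union> D"
    by blast
  obtain J0 where J0: "finite J0" "D = (\<lambda>j. ball (xs j) (rs j)) ` J0"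
    using finite_subset_image[OF D(2) D(1)] by blast
  define J where "J = {j\<in>J0. \<exists>e\<in>E. dist e (xs j) < rs j}"
  have fJ: "finite J" unfolding J_def using J0(1) by simp
  have cover: "E \<subseteq> (\<Union>j\<in>J. ball (xs j) (rs j))"
  proof
    fix e assume e: "e \<in> E"
    then obtain j where j: "j \<in> J0" "e \<in> ball (xs j) (rs j)" using D(3) J0(2) by blast
    then have "dist e (xs j) < rs j" by (simp add: dist_commute)
    then have "j \<in> J" unfolding J_def using j e by blast
    then show "e \<in> (\<Union>j\<in>J. ball (xs j) (rs j))" using j by blast
  qed
  have meet: "\<exists>e\<in>E. dist e (xs j) < rs j" if "j \<in> J" for j using that unfolding J_def by blast
  have rpos: "0 < rs j" if "j \<in> J" for j
    using meet[OF that] by (meson dist_not_less_zero le_less_trans not_le)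
  have rsmall: "4 * rs j \<le> R - diameter E" for j using rsb[of j] unfolding \<delta>_def by simp
  have bE: "bounded E" using cE by (rule compact_imp_bounded)
  define S where "S = (\<Sum>j\<in>J. Psi_gauge k R (rs j))"
  have Psi0: "Psi_gauge k R (rs j) \<ge> 0" for j by (rule Psi_nonneg) (use rsb R in auto)
  have "ennreal S = (\<Sum>j\<in>J. ennreal (Psi_gauge k R (rs j)))"
    unfolding S_def by (rule sum_ennreal[symmetric]) (use Psi0 in auto)
  also have "\<dots> \<le> (\<Sum>j. ennreal (Psi_gauge k R (rs j)))" by (intro sum_le_suminf) (use fJ in auto)
  finally have "ennreal S < ennreal t" using sl by simp
  moreover have S0: "S \<ge> 0" unfolding S_def by (intro sum_nonneg Psi0)
  ultimately have St: "S < t" by (simp add: ennreal_less_iff)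
  define \<epsilon> where "\<epsilon> = K * (t - S)"
  have eps: "\<epsilon> > 0" unfolding \<epsilon>_def using K0 St by simp
  have "mu_bar k h E \<ge> ereal (1 / (\<epsilon> + Kc k (h*R) * (\<Sum>j\<in>J. Psi_gauge k R (rs j))))"
    by (rule core[OF k1 kn h R a bE fJ rpos rsmall meet cover eps])
  moreover have "\<epsilon> + Kc k (h*R) * (\<Sum>j\<in>J. Psi_gauge k R (rs j)) = K * t"
    unfolding \<epsilon>_def K_def S_def by (simp add: algebra_simps)
  ultimately show ?thesis unfolding K_def by simp
qed

lemma limit_arg:
  fixes M :: ereal and H :: ennreal
  assumes C: "C > 0" and M0: "M \<ge> 0" and hyp: "\<And>t. t > 0 \<Longrightarrow> H < ennreal t \<Longrightarrow> M \<ge> ereal (C / t)"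
  shows "M \<ge> div_conv C H"
proof (cases "H = 0")
  case True
  have "M = \<infinity>"
  proof (rule ccontr)
    assume "M \<noteq> \<infinity>"
    then obtain m where m: "M = ereal m" using M0 by (cases M) auto
    have m0: "m \<ge> 0" using M0 m by simp
    define t where "t = C / (m + 1)"
    have t: "t > 0" unfolding t_def using C m0 by simp
    have "H < ennreal t" using True t by simp
    then have "M \<ge> ereal (C / t)" using hyp t by blast
    moreover have "C / t = m + 1" unfolding t_def using C m0 by simp
    ultimately show False using m by simp
  qed
  then show ?thesis by simp
next
  case False
  show ?thesis
  proof (cases "H = top")
    case True
    then show ?thesis using M0 False unfolding div_conv_def by simp
  next
    case False2: False
    obtain h0 where h0: "H = ennreal h0" "h0 \<ge> 0" using False2 by (cases H) auto
    have h0p: "h0 > 0" using h0 False by (cases "h0 = 0") auto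
    have dc: "div_conv C H = ereal (C / h0)"
      unfolding div_conv_def using False h0 h0p by (simp add: enn2ereal_ennreal)
    have "M \<ge> ereal (C / h0)"
    proof (rule ccontr)
      assume "\<not> M \<ge> ereal (C / h0)"
      then have lt: "M < ereal (C / h0)" by simp
      then obtain m where m: "M = ereal m" using M0 by (cases M) auto
      have mq: "m < C / h0" "m \<ge> 0" using lt M0 m by auto
      define q where "q = C / h0"
      have q: "q > 0" "m < q" unfolding q_def using C h0p mq by auto
      define t where "t = 2 * C / (q + m)"
      have t: "t > 0" unfolding t_def using C q mq by simp
      have "h0 < t"
      proof -
        have "h0 = C / q" unfolding q_def using C h0p by simp
        also have "C / q < 2 * C / (q + m)" using C q mq by (simp add: field_simps)
        finally show ?thesis unfolding t_def .
      qed
      then have "H < ennreal t" using h0 by (simp add: ennreal_less_iff)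
      then have "M \<ge> ereal (C / t)" using hyp t by blast
      moreover have "C / t = (q + m) / 2" unfolding t_def using C q mq by simp
      ultimately show False using m q by simp
    qed
    then show ?thesis using dc by simp
  qed
qed

theorem mainTheorem1:
  fixes k :: nat and a :: real
  assumes "CARD('n::finite) \<ge> 2"
    and "1 \<le> k" and "k \<le> CARD('n) - 1"
    and "0 \<le> a" and "a < real k"
  shows "\<exists>C>0. \<forall>(E :: (real^'n) set) R h.
           compact E \<and> R > 0 \<and> h \<ge> 0 \<and> h * R = a \<and> diameter E < R \<longrightarrow>
           mu_bar k h E \<ge> div_conv C (gen_hausdorff (Psi_gauge k R) E)"
proof -
  have K0: "Kc k a > 0" by (rule Kc_pos) (use assms in auto)
  have kn: "k \<le> CARD('n)" using assms by linarith
  show ?thesis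
  proof (intro exI[of _ "1 / Kc k a"] conjI allI impI)
    show "1 / Kc k a > 0" using K0 by simp
    fix E :: "(real^'n) set" and R h
    assume H: "compact E \<and> R > 0 \<and> h \<ge> 0 \<and> h * R = a \<and> diameter E < R"
    then have cE: "compact E" and R: "R > 0" and h: "h \<ge> 0" and hR: "h * R = a" and dE: "diameter E < R"
      by auto
    have a': "h * R < real k" using hR assms by simp
    show "mu_bar k h E \<ge> div_conv (1 / Kc k a) (gen_hausdorff (Psi_gauge k R) E)"
    proof (rule limit_arg)
      show "1 / Kc k a > 0" using K0 by simp
      show "mu_bar k h E \<ge> 0" by (rule mu_bar_nonneg[OF kn h])
      fix t :: real assume t: "t > 0" and lt: "gen_hausdorff (Psi_gauge k R) E < ennreal t"
      have "mu_bar k h E \<ge> ereal (1 / (Kc k (h*R) * t))"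
        by (rule cover_bound[OF assms(2) kn h R a' cE dE t lt])
      then show "mu_bar k h E \<ge> ereal (1 / Kc k a / t)" using hR by simp
    qed
  qed
qed

end
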